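(* For every constant $\alpha>0$ there is a constant $\beta>0$ depending only on $\alpha$ such that the following holds. Let $k \in \mathbb{Z}_+$, $\varepsilon \in (0, 1)$, let $X \subset \mathbb{R}^d$ be a finite data set with $|X|=n$, let $p\in\{1,\dots,n\}$, let $\mathcal{L}$ be a finite collection of lines in $\mathbb{R}^d$, and let $s>0$ and $t_l>0$ for $l\in\mathcal{L}$. Suppose (i) $X$ is partitioned into sets $\{X_l : l \in \mathcal{L}\}$ with $X_l \subseteq l$ for each $l \in \mathcal{L}$, and (ii) for each $l \in \mathcal{L}$, $X_l$ is partitioned into a family $\mathcal{Y}_l$ of sub-intervals (sets of points of $X_l$ that are consecutive in the order along $l$, with pairwise disjoint segments $I(Y)$), such that every $Y \in \mathcal{Y}_l$ satisfies $\mathrm{len}(I(Y)) \leq \alpha\frac{\varepsilon}{p} s$ or $\delta(Y) \leq \alpha\frac{\varepsilon}{k} t_l$. Let $D$ be the multiset consisting of $\mu(Y)$ with multiplicity $|Y|$ for each $Y\in\mathcal{Y}_l$, $l\in\mathcal{L}$. Then for every set $C\subset \mathbb{R}^d$ of $k$ centers, $|\mathrm{cost}_p(D, C) - \mathrm{cost}_p(X, C)| \leq \beta\,\varepsilon \,\big(s + \sum_{l \in \mathcal{L}} t_l\big)$.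
   Context: Distances are Euclidean and $d(x,C):=\min_{c\in C}d(x,c)$. For a finite multiset $Y$ and finite nonempty $C$, $\mathrm{cost}_p(Y,C)$ is the sum of the $p$ largest values of $d(y,C)$, $y\in Y$ (with multiplicity). For a finite set $Y$ of points on a line, $I(Y)$ is the smallest closed segment containing $Y$, $\mathrm{len}(I(Y))$ its length, $\mu(Y):=\frac{1}{|Y|}\sum_{y\in Y}y$ its mean, and $\delta(Y):=\sum_{y\in Y}d(y,\mu(Y))$ its cumulative error. *)

theory Defs
  imports Complex_Main "HOL-Library.Multiset"
begin

text \<open>Points of R^d are represented as functions nat => real vanishing outside
  {..<d}, so that the dimension d can be quantified inside the statement
  (beta must not depend on d).\<close>

type_synonym pt = "nat \<Rightarrow> real"

definition in_Rd :: "nat \<Rightarrow> pt \<Rightarrow> bool" where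
  "in_Rd d x \<longleftrightarrow> (\<forall>i\<ge>d. x i = 0)"

definition edist :: "nat \<Rightarrow> pt \<Rightarrow> pt \<Rightarrow> real" where
  "edist d x y = sqrt (\<Sum>i<d. (x i - y i)^2)"

definition distC :: "nat \<Rightarrow> pt \<Rightarrow> pt set \<Rightarrow> real" where
  "distC d x C = Min (edist d x ` C)"

definition costp :: "nat \<Rightarrow> nat \<Rightarrow> pt multiset \<Rightarrow> pt set \<Rightarrow> real" where
  "costp d p Y C =
     sum_list (take p (rev (sorted_list_of_multiset (image_mset (\<lambda>y. distC d y C) Y))))"

definition is_line :: "nat \<Rightarrow> pt set \<Rightarrow> bool" where
  "is_line d l \<longleftrightarrow> (\<exists>a v. in_Rd d a \<and> in_Rd d v \<and> v \<noteq> (\<lambda>i. 0) \<and>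
      l = {(\<lambda>i. a i + t * v i) | t. True})"

text \<open>I(Y): smallest closed segment containing a finite set Y of collinear points
  (the union of the segments between points of Y).\<close>
definition segI :: "pt set \<Rightarrow> pt set" where
  "segI Y = {z. \<exists>a\<in>Y. \<exists>b\<in>Y. \<exists>t\<in>{0..1::real}. z = (\<lambda>i. (1 - t) * a i + t * b i)}"

definition seglen :: "nat \<Rightarrow> pt set \<Rightarrow> real" where
  "seglen d S = (SUP a\<in>S. SUP b\<in>S. edist d a b)"

definition mu :: "pt set \<Rightarrow> pt" where
  "mu Y = (\<lambda>i. (\<Sum>y\<in>Y. y i) / real (card Y))"

definition delta :: "nat \<Rightarrow> pt set \<Rightarrow> real" where
  "delta d Y = (\<Sum>y\<in>Y. edist d y (mu Y))"

end

theory Submission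
  imports Defs "HOL-Analysis.Convex" "HOL-Analysis.L2_Norm"
begin


lemma topp_exists:
  fixes g :: "'a \<Rightarrow> real"
  assumes fin: "finite X" and p1: "1 \<le> p" and pX: "p \<le> card X"
  shows "\<exists>S th. S \<subseteq> X \<and> card S = p \<and>
     sum_list (take p (rev (sorted_list_of_multiset (image_mset g (mset_set X))))) = sum g S \<and>
     (\<forall>x\<in>S. th \<le> g x) \<and> (\<forall>x\<in>X - S. g x \<le> th)"
proof -
  obtain xs where xsd: "distinct xs" "set xs = X" using finite_distinct_list[OF fin] by blast
  define ws where "ws = rev (sort_key g xs)"
  have dxs: "distinct xs" and sxs: "set xs = X" using xsd by auto
  have dws: "distinct ws" and sws: "set ws = X" using dxs sxs by (auto simp: ws_def)
  have lws: "length ws = card X" using dws sws distinct_card by fastforce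
  have msx: "mset xs = mset_set X" using xsd by (metis mset_set_set)
  have "sort (map g xs) = map g (sort_key g xs)"
    by (rule properties_for_sort) (auto simp: sorted_sort_key)
  hence eq1: "sorted_list_of_multiset (image_mset g (mset_set X)) = map g (sort_key g xs)"
    by (metis msx mset_map sorted_list_of_multiset_mset)
  have sortd: "sorted (map g (sort_key g xs))" by (simp add: sorted_sort_key)
  have mono: "\<And>i j. i \<le> j \<Longrightarrow> j < length ws \<Longrightarrow> g (ws ! j) \<le> g (ws ! i)"
  proof -
    fix i j assume ij: "i \<le> j" "j < length ws"
    let ?n = "length ws"
    have ln: "length (sort_key g xs) = ?n" by (simp add: ws_def)
    have "ws ! j = sort_key g xs ! (?n - Suc j)" "ws ! i = sort_key g xs ! (?n - Suc i)"
      using ij by (auto simp: ws_def rev_nth)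
    moreover have "g (sort_key g xs ! (?n - Suc j)) \<le> g (sort_key g xs ! (?n - Suc i))"
      using sorted_nth_mono[OF sortd, of "?n - Suc j" "?n - Suc i"] ij ln by auto
    ultimately show "g (ws ! j) \<le> g (ws ! i)" by simp
  qed
  define S where "S = set (take p ws)"
  define th where "th = g (ws ! (p - 1))"
  have "S \<subseteq> X" using sws by (auto simp: S_def dest: in_set_takeD)
  moreover have "card S = p" using dws lws pX by (simp add: S_def distinct_card)
  moreover have "sum_list (take p (rev (sorted_list_of_multiset (image_mset g (mset_set X))))) = sum g S"
  proof -
    have "take p (rev (sorted_list_of_multiset (image_mset g (mset_set X)))) = map g (take p ws)"
      by (simp add: eq1 ws_def rev_map take_map)
    thus ?thesis using dws by (simp add: S_def sum_list_distinct_conv_sum_set)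
  qed
  moreover have "\<forall>x\<in>S. th \<le> g x"
  proof
    fix x assume "x \<in> S"
    then obtain i where "i < p" "x = ws ! i" using pX lws by (auto simp: S_def in_set_conv_nth)
    thus "th \<le> g x" using mono[of i "p - 1"] pX lws p1 by (simp add: th_def)
  qed
  moreover have "\<forall>x\<in>X - S. g x \<le> th"
  proof
    fix x assume x: "x \<in> X - S"
    then obtain j where j: "j < length ws" "x = ws ! j" using sws by (auto simp: in_set_conv_nth)
    have "\<not> j < p" using x j by (auto simp: S_def in_set_conv_nth)
    thus "g x \<le> th" using mono[of "p - 1" j] j p1 by (simp add: th_def)
  qed
  ultimately show ?thesis by blast
qed

lemma topp_exch:
  fixes g :: "'a \<Rightarrow> real"
  assumes fin: "finite X" and S0: "S0 \<subseteq> X" "card S0 = p" and th0: "\<forall>x\<in>S0. th \<le> g x" "\<forall>x\<in>X - S0. g x \<le> th"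
    and S: "S \<subseteq> X" "card S = p"
  shows "sum g S \<le> sum g S0"
proof -
  have fS: "finite S" "finite S0" using fin S S0 finite_subset by auto
  have c: "card (S - S0) = card (S0 - S)"
    using S S0 fS by (metis card_Diff_subset_Int inf_commute finite_Int)
  have "sum g (S - S0) \<le> sum (\<lambda>_. th) (S - S0)"
    by (rule sum_mono) (use th0 S in auto)
  also have "\<dots> = sum (\<lambda>_. th) (S0 - S)" using c by simp
  also have "\<dots> \<le> sum g (S0 - S)" by (rule sum_mono) (use th0 in auto)
  finally have "sum g (S - S0) \<le> sum g (S0 - S)" .
  moreover have "sum g S = sum g (S - S0) + sum g (S \<inter> S0)"
    using fS by (metis sum.Int_Diff add.commute)
  moreover have "sum g S0 = sum g (S0 - S) + sum g (S \<inter> S0)"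
    using fS by (metis sum.Int_Diff add.commute inf_commute)
  ultimately show ?thesis by linarith
qed



lemma tel:
  fixes key sm sp :: "'a \<Rightarrow> real"
  assumes fin: "finite F" and inj: "inj_on key F"
    and ord: "\<And>x y. x \<in> F \<Longrightarrow> y \<in> F \<Longrightarrow> key x < key y \<Longrightarrow> sp x \<le> sm y"
    and lo: "\<And>x. x \<in> F \<Longrightarrow> -L \<le> sm x" and hi: "\<And>x. x \<in> F \<Longrightarrow> sp x \<le> L" and L0: "0 \<le> L"
  shows "(\<Sum>x\<in>F. sp x - sm x) \<le> 2 * L"
proof -
  have "\<And>G. finite G \<Longrightarrow> G \<subseteq> F \<longrightarrow> (\<forall>z. -L \<le> z \<longrightarrow> (\<forall>y\<in>G. sp y \<le> z) \<longrightarrow> (\<Sum>x\<in>G. sp x - sm x) \<le> z + L)"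
  proof -
    fix G :: "'a set" assume "finite G"
    thus "?thesis G"
    proof (induction G rule: finite_ranking_induct[where f = key])
      case empty
      then show ?case by simp
    next
      case (insert x S)
      show ?case
      proof (intro impI allI)
        fix z assume sub: "insert x S \<subseteq> F" and z: "-L \<le> z" and zb: "\<forall>y\<in>insert x S. sp y \<le> z"
        have xF: "x \<in> F" using sub by auto
        show "(\<Sum>x\<in>insert x S. sp x - sm x) \<le> z + L"
        proof (cases "x \<in> S")
          case True
          hence "insert x S = S" by auto
          thus ?thesis using insert z zb sub by auto
        next
          case False
          have "\<forall>y\<in>S. sp y \<le> sm x"
          proof
            fix y assume y: "y \<in> S"
            have "y \<in> F" using y sub by auto
            moreover have "key y \<noteq> key x" using inj y False xF \<open>y \<in> F\<close> by (metis inj_onD)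
            ultimately have "key y < key x" using insert(2)[OF y] by auto
            thus "sp y \<le> sm x" using ord \<open>y \<in> F\<close> xF by auto
          qed
          hence "(\<Sum>x\<in>S. sp x - sm x) \<le> sm x + L" using insert(3) sub lo[OF xF] by auto
          thus ?thesis using False insert(1) zb by auto
        qed
      qed
    qed
  qed
  from this[OF fin, rule_format, of L] have "(\<Sum>x\<in>F. sp x - sm x) \<le> L + L" using hi L0 by auto
  thus ?thesis by simp
qed



definition sl :: "(real \<Rightarrow> real) \<Rightarrow> real \<Rightarrow> real \<Rightarrow> real" where
  "sl h a b = (h b - h a) / (b - a)"

lemma sl_sym: "sl h a b = sl h b a"
  unfolding sl_def by (metis minus_divide_divide minus_diff_eq)

lemma slope3:
  assumes cv: "convex_on UNIV h" and xy: "x < y" and yz: "y < z"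
  shows "sl h x y \<le> sl h x z" "sl h x z \<le> sl h y z" "sl h x y \<le> sl h y z"
proof -
  have a: "(h x - h y) / (x - y) \<le> (h x - h z) / (x - z)"
    and b: "(h x - h z) / (x - z) \<le> (h y - h z) / (y - z)"
    using convex_on_slope_le[OF cv _ _ xy yz] by auto
  have e: "\<And>a b. (h a - h b) / (a - b) = sl h a b"
    unfolding sl_def by (metis minus_divide_divide minus_diff_eq)
  show "sl h x y \<le> sl h x z" "sl h x z \<le> sl h y z" using a b unfolding e by auto
  thus "sl h x y \<le> sl h y z" by linarith
qed

lemma sl_mult: "a \<noteq> b \<Longrightarrow> h b - h a = sl h a b * (b - a)"
  unfolding sl_def by simp

lemma sl_le_mono:
  assumes cv: "convex_on UNIV h" and "x1 < x2" "x2 \<le> y1" "y1 < y2"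
  shows "sl h x1 x2 \<le> sl h y1 y2"
proof (cases "x2 = y1")
  case True
  thus ?thesis using slope3(3)[OF cv, of x1 x2 y2] assms by simp
next
  case False
  hence "x2 < y1" using assms by simp
  thus ?thesis using slope3(3)[OF cv, of x1 x2 y1] slope3(3)[OF cv, of x2 y1 y2] assms by simp
qed

lemma sl_bound:
  assumes lip: "\<And>u w. \<bar>h u - h w\<bar> \<le> L * \<bar>u - w\<bar>" and "a \<noteq> b"
  shows "\<bar>sl h a b\<bar> \<le> L"
proof -
  have "\<bar>sl h a b\<bar> = \<bar>h b - h a\<bar> / \<bar>b - a\<bar>" by (simp add: sl_def abs_divide)
  also have "\<dots> \<le> L" using lip[of b a] assms(2) by (simp add: divide_le_eq)
  finally show ?thesis .
qed

lemma gap_bound: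
  fixes h :: "real \<Rightarrow> real" and U :: "real set"
  assumes cv: "convex_on UNIV h" and fin: "finite U" and ne: "U \<noteq> {}" and mM: "Min U < Max U"
  defines "av \<equiv> (\<Sum>U) / real (card U)"
  shows "Min U < av" "av < Max U" "sl h (Min U) av \<le> sl h av (Max U)"
    "\<bar>\<Sum>u\<in>U. h u - h av\<bar> \<le> (\<Sum>u\<in>U. \<bar>u - av\<bar>) / 2 * (sl h av (Max U) - sl h (Min U) av)"
proof -
  let ?m = "Min U" and ?M = "Max U"
  have cpos: "real (card U) > 0" using fin ne by (simp add: card_gt_0_iff)
  have mU: "?m \<in> U" and MU: "?M \<in> U" using fin ne by auto
  have bnd: "\<And>u. u \<in> U \<Longrightarrow> ?m \<le> u \<and> u \<le> ?M" using fin by auto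
  have sumeq: "\<Sum>U = av * real (card U)" using cpos by (simp add: av_def)
  have "(\<Sum>u\<in>U. u - ?m) > 0"
  proof -
    have "(\<Sum>u\<in>U. u - ?m) \<ge> (\<Sum>u\<in>{?M}. u - ?m)"
      by (rule sum_mono2) (use fin MU bnd in auto)
    thus ?thesis using mM by simp
  qed
  hence "\<Sum>U - real (card U) * ?m > 0" by (simp add: sum_subtractf)
  thus m1: "?m < av" using sumeq cpos by (metis diff_gt_0_iff_gt mult.commute mult_less_cancel_right_pos)
  have "(\<Sum>u\<in>U. ?M - u) > 0"
  proof -
    have "(\<Sum>u\<in>U. ?M - u) \<ge> (\<Sum>u\<in>{?m}. ?M - u)"
      by (rule sum_mono2) (use fin mU bnd in auto)
    thus ?thesis using mM by simp
  qed
  hence "real (card U) * ?M - \<Sum>U > 0" by (simp add: sum_subtractf)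
  thus m2: "av < ?M" using sumeq cpos by (metis diff_gt_0_iff_gt mult.commute mult_less_cancel_right_pos)
  show sms: "sl h ?m av \<le> sl h av ?M" using slope3(3)[OF cv m1 m2] .
  define sm where "sm = sl h ?m av"
  define sp where "sp = sl h av ?M"
  define P where "P u = max (u - av) 0" for u
  define N where "N u = max (av - u) 0" for u
  have pt: "sm * P u - sp * N u \<le> h u - h av \<and> h u - h av \<le> sp * P u - sm * N u" if u: "u \<in> U" for u
  proof -
    consider "u = av" | "av < u" | "u < av" by linarith
    thus ?thesis
    proof cases
      case 1 thus ?thesis by (simp add: P_def N_def)
    next
      case 2
      have PN: "P u = u - av" "N u = 0" using 2 by (auto simp: P_def N_def)
      have e: "h u - h av = sl h av u * (u - av)" using sl_mult[of av u h] 2 by simp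
      have up: "sl h av u \<le> sp"
      proof (cases "u = ?M")
        case True thus ?thesis by (simp add: sp_def)
      next
        case False
        hence "u < ?M" using bnd[OF u] by auto
        thus ?thesis using slope3(1)[OF cv 2] by (simp add: sp_def)
      qed
      have lo: "sm \<le> sl h av u" using slope3(3)[OF cv m1 2] by (simp add: sm_def)
      show ?thesis unfolding PN e using up lo 2 by (simp add: mult_right_mono)
    next
      case 3
      have PN: "P u = 0" "N u = av - u" using 3 by (auto simp: P_def N_def)
      have e: "h u - h av = - (sl h u av * (av - u))" using sl_mult[of u av h] 3 by simp
      have up: "sm \<le> sl h u av"
      proof (cases "u = ?m")
        case True thus ?thesis by (simp add: sm_def)
      next
        case False
        hence "?m < u" using bnd[OF u] by auto
        thus ?thesis using slope3(2)[OF cv _ 3] by (simp add: sm_def)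
      qed
      have lo: "sl h u av \<le> sp" using slope3(3)[OF cv 3 m2] by (simp add: sp_def)
      show ?thesis unfolding PN e using up lo 3 by (simp add: mult_right_mono)
    qed
  qed
  have sPN: "(\<Sum>u\<in>U. P u) = (\<Sum>u\<in>U. \<bar>u - av\<bar>) / 2" "(\<Sum>u\<in>U. N u) = (\<Sum>u\<in>U. \<bar>u - av\<bar>) / 2"
  proof -
    have d: "(\<Sum>u\<in>U. P u) - (\<Sum>u\<in>U. N u) = 0"
    proof -
      have "(\<Sum>u\<in>U. P u) - (\<Sum>u\<in>U. N u) = (\<Sum>u\<in>U. u - av)"
        by (simp add: sum_subtractf[symmetric] P_def N_def) (rule sum.cong, auto)
      also have "\<dots> = 0" using sumeq by (simp add: sum_subtractf)
      finally show ?thesis .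
    qed
    have s: "(\<Sum>u\<in>U. P u) + (\<Sum>u\<in>U. N u) = (\<Sum>u\<in>U. \<bar>u - av\<bar>)"
      by (simp add: sum.distrib[symmetric] P_def N_def) (rule sum.cong, auto)
    show "(\<Sum>u\<in>U. P u) = (\<Sum>u\<in>U. \<bar>u - av\<bar>) / 2" "(\<Sum>u\<in>U. N u) = (\<Sum>u\<in>U. \<bar>u - av\<bar>) / 2"
      using d s by linarith+
  qed
  have "(\<Sum>u\<in>U. h u - h av) \<le> (\<Sum>u\<in>U. sp * P u - sm * N u)" by (rule sum_mono) (use pt in auto)
  also have "\<dots> = sp * (\<Sum>u\<in>U. P u) - sm * (\<Sum>u\<in>U. N u)"
    by (simp add: sum_subtractf sum_distrib_left)
  finally have A: "(\<Sum>u\<in>U. h u - h av) \<le> (\<Sum>u\<in>U. \<bar>u - av\<bar>) / 2 * (sp - sm)"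
    unfolding sPN by (simp add: algebra_simps)
  have "(\<Sum>u\<in>U. sm * P u - sp * N u) \<le> (\<Sum>u\<in>U. h u - h av)" by (rule sum_mono) (use pt in auto)
  moreover have "(\<Sum>u\<in>U. sm * P u - sp * N u) = sm * (\<Sum>u\<in>U. P u) - sp * (\<Sum>u\<in>U. N u)"
    by (simp add: sum_subtractf sum_distrib_left)
  ultimately have B0: "sm * ((\<Sum>u\<in>U. \<bar>u - av\<bar>) / 2) - sp * ((\<Sum>u\<in>U. \<bar>u - av\<bar>) / 2) \<le> (\<Sum>u\<in>U. h u - h av)"
    unfolding sPN by simp
  have "- ((\<Sum>u\<in>U. \<bar>u - av\<bar>) / 2 * (sp - sm)) = sm * ((\<Sum>u\<in>U. \<bar>u - av\<bar>) / 2) - sp * ((\<Sum>u\<in>U. \<bar>u - av\<bar>) / 2)"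
    by (simp add: field_simps)
  hence B: "- ((\<Sum>u\<in>U. \<bar>u - av\<bar>) / 2 * (sp - sm)) \<le> (\<Sum>u\<in>U. h u - h av)" using B0 by linarith
  show "\<bar>\<Sum>u\<in>U. h u - h av\<bar> \<le> (\<Sum>u\<in>U. \<bar>u - av\<bar>) / 2 * (sl h av ?M - sl h ?m av)"
    using A B by (simp add: sp_def sm_def abs_le_iff)
qed



definition lpt :: "pt \<Rightarrow> pt \<Rightarrow> real \<Rightarrow> pt" where
  "lpt a v u = (\<lambda>i. a i + u * v i)"

definition nrm :: "nat \<Rightarrow> pt \<Rightarrow> real" where
  "nrm d v = sqrt (\<Sum>i<d. (v i)^2)"

lemma edist_L2: "edist d x y = L2_set (\<lambda>i. x i - y i) {..<d}"
  by (simp add: edist_def L2_set_def)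

lemma edist_nonneg: "0 \<le> edist d x y"
  by (simp add: edist_def sum_nonneg)

lemma edist_sym: "edist d x y = edist d y x"
  unfolding edist_def by (simp add: power2_commute)

lemma edist_tri: "edist d x z \<le> edist d x y + edist d y z"
proof -
  have "edist d x z = L2_set (\<lambda>i. (x i - y i) + (y i - z i)) {..<d}"
    by (simp add: edist_L2)
  also have "\<dots> \<le> edist d x y + edist d y z"
    unfolding edist_L2 by (rule L2_set_triangle_ineq)
  finally show ?thesis .
qed

lemma edist_lpt: "edist d (lpt a v u) (lpt a v w) = nrm d v * \<bar>u - w\<bar>"
proof -
  have "(\<Sum>i<d. (lpt a v u i - lpt a v w i)^2) = (\<Sum>i<d. (u - w)^2 * (v i)^2)"
    by (rule sum.cong) (auto simp: lpt_def power_mult_distrib[symmetric] algebra_simps)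
  also have "\<dots> = (u - w)^2 * (\<Sum>i<d. (v i)^2)" by (simp add: sum_distrib_left)
  finally have "(\<Sum>i<d. (lpt a v u i - lpt a v w i)^2) = (u - w)^2 * (\<Sum>i<d. (v i)^2)" .
  thus ?thesis by (simp add: edist_def nrm_def real_sqrt_mult mult.commute)
qed

lemma distC_le: "finite C \<Longrightarrow> c \<in> C \<Longrightarrow> distC d x C \<le> edist d x c"
  by (simp add: distC_def)

lemma distC_att: "finite C \<Longrightarrow> C \<noteq> {} \<Longrightarrow> \<exists>c\<in>C. distC d x C = edist d x c"
  unfolding distC_def by (metis (mono_tags, lifting) Min_in finite_imageI image_iff image_is_empty)

lemma distC_lip1: "finite C \<Longrightarrow> C \<noteq> {} \<Longrightarrow> distC d x C \<le> edist d x y + distC d y C"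
proof -
  assume C: "finite C" "C \<noteq> {}"
  obtain c where c: "c \<in> C" "distC d y C = edist d y c" using distC_att[OF C] by blast
  have "distC d x C \<le> edist d x c" using distC_le[OF C(1) c(1)] .
  also have "\<dots> \<le> edist d x y + edist d y c" by (rule edist_tri)
  finally show ?thesis using c by simp
qed

lemma distC_lip: "finite C \<Longrightarrow> C \<noteq> {} \<Longrightarrow> \<bar>distC d x C - distC d y C\<bar> \<le> edist d x y"
  using distC_lip1[of C d x y] distC_lip1[of C d y x] edist_sym[of d x y] by auto

lemma lpt_conv: "lpt a v ((1 - t) * x + t * y) = (\<lambda>i. (1 - t) * lpt a v x i + t * lpt a v y i)"
  by (rule ext) (simp add: lpt_def algebra_simps)

lemma h_convex: "convex_on UNIV (\<lambda>u. edist d (lpt a v u) c)"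
proof (rule convex_onI)
  fix t x y :: real assume t: "0 < t" "t < 1"
  have "edist d (lpt a v ((1 - t) *\<^sub>R x + t *\<^sub>R y)) c
      = L2_set (\<lambda>i. (1 - t) * (lpt a v x i - c i) + t * (lpt a v y i - c i)) {..<d}"
    unfolding edist_L2 by (rule L2_set_cong) (auto simp: lpt_def algebra_simps)
  also have "\<dots> \<le> L2_set (\<lambda>i. (1 - t) * (lpt a v x i - c i)) {..<d} + L2_set (\<lambda>i. t * (lpt a v y i - c i)) {..<d}"
    by (rule L2_set_triangle_ineq)
  also have "\<dots> = (1 - t) * edist d (lpt a v x) c + t * edist d (lpt a v y) c"
    unfolding edist_L2 using t by (simp add: L2_set_right_distrib)
  finally show "edist d (lpt a v ((1 - t) *\<^sub>R x + t *\<^sub>R y)) c \<le> (1 - t) * edist d (lpt a v x) c + t * edist d (lpt a v y) c" .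
qed simp

lemma h_lip: "\<bar>edist d (lpt a v u) c - edist d (lpt a v w) c\<bar> \<le> nrm d v * \<bar>u - w\<bar>"
proof -
  have "edist d (lpt a v u) c \<le> edist d (lpt a v u) (lpt a v w) + edist d (lpt a v w) c" by (rule edist_tri)
  moreover have "edist d (lpt a v w) c \<le> edist d (lpt a v w) (lpt a v u) + edist d (lpt a v u) c" by (rule edist_tri)
  ultimately show ?thesis using edist_lpt[of d a v u w] edist_lpt[of d a v w u] by (auto simp: abs_minus_commute)
qed

lemma h_cont: "continuous_on S (\<lambda>u. edist d (lpt a v u) c)"
  unfolding edist_def lpt_def by (intro continuous_intros)

lemma h_sq: "(edist d (lpt a v u) c)^2 = (nrm d v)^2 * u^2 + 2 * (\<Sum>i<d. v i * (a i - c i)) * u + (\<Sum>i<d. (a i - c i)^2)"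
proof -
  have "(edist d (lpt a v u) c)^2 = (\<Sum>i<d. (lpt a v u i - c i)^2)"
    unfolding edist_def by (simp add: sum_nonneg)
  also have "\<dots> = (\<Sum>i<d. u^2 * (v i)^2 + 2 * u * (v i * (a i - c i)) + (a i - c i)^2)"
    by (rule sum.cong) (auto simp: lpt_def power2_eq_square algebra_simps)
  also have "\<dots> = (\<Sum>i<d. u^2 * (v i)^2) + (\<Sum>i<d. 2 * u * (v i * (a i - c i))) + (\<Sum>i<d. (a i - c i)^2)"
    by (simp add: sum.distrib)
  also have "\<dots> = u^2 * (\<Sum>i<d. (v i)^2) + 2 * u * (\<Sum>i<d. v i * (a i - c i)) + (\<Sum>i<d. (a i - c i)^2)"
    by (simp add: sum_distrib_left)
  also have "\<dots> = (nrm d v)^2 * u^2 + 2 * (\<Sum>i<d. v i * (a i - c i)) * u + (\<Sum>i<d. (a i - c i)^2)"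
    by (simp add: nrm_def sum_nonneg)
  finally show ?thesis .
qed

lemma roots_card:
  assumes np: "nrm d v > 0"
  shows "finite {u. edist d (lpt a v u) c = th} \<and> card {u. edist d (lpt a v u) c = th} \<le> 2"
proof (cases "{u. edist d (lpt a v u) c = th} = {}")
  case True thus ?thesis by simp
next
  case False
  then obtain u0 where u0: "edist d (lpt a v u0) c = th" by auto
  define A where "A = (nrm d v)^2"
  define B where "B = (\<Sum>i<d. v i * (a i - c i))"
  have A: "A > 0" using np by (simp add: A_def)
  have sub: "{u. edist d (lpt a v u) c = th} \<subseteq> {u0, - 2 * B / A - u0}"
  proof
    fix u assume "u \<in> {u. edist d (lpt a v u) c = th}"
    hence "(edist d (lpt a v u) c)^2 = (edist d (lpt a v u0) c)^2" using u0 by simp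
    hence "A * u^2 + 2 * B * u = A * u0^2 + 2 * B * u0" unfolding h_sq A_def B_def by simp
    hence "(u - u0) * (A * (u + u0) + 2 * B) = 0" by (simp add: algebra_simps power2_eq_square)
    hence "u = u0 \<or> A * (u + u0) + 2 * B = 0" by simp
    moreover have "A * (u + u0) + 2 * B = 0 \<Longrightarrow> u = - 2 * B / A - u0" using A by (simp add: field_simps)
    ultimately show "u \<in> {u0, - 2 * B / A - u0}" by auto
  qed
  have "card {u0, - 2 * B / A - u0} \<le> 2" by (simp add: card_insert_if)
  thus ?thesis using sub by (meson card_mono finite.emptyI finite.insertI finite_subset order_trans)
qed

lemma cell_conv:
  assumes "u1 \<le> u" "u \<le> u2"
    and "edist d (lpt a v u1) c \<le> edist d (lpt a v u1) c'" "edist d (lpt a v u2) c \<le> edist d (lpt a v u2) c'"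
  shows "edist d (lpt a v u) c \<le> edist d (lpt a v u) c'"
proof -
  define f where "f w = (edist d (lpt a v w) c)^2 - (edist d (lpt a v w) c')^2" for w
  define al where "al = (\<Sum>i<d. (a i - c i)^2) - (\<Sum>i<d. (a i - c' i)^2)"
  define be where "be = 2 * (\<Sum>i<d. v i * (a i - c i)) - 2 * (\<Sum>i<d. v i * (a i - c' i))"
  have f: "f w = al + be * w" for w unfolding f_def h_sq al_def be_def by (simp add: algebra_simps)
  have le: "x \<le> y \<longleftrightarrow> x^2 \<le> y^2" if "0 \<le> x" "0 \<le> y" for x y :: real
    using that by (metis abs_le_square_iff abs_of_nonneg)
  have "f u1 \<le> 0" using assms(3) le[OF edist_nonneg edist_nonneg] unfolding f_def by simp
  have "f u2 \<le> 0" using assms(4) le[OF edist_nonneg edist_nonneg] unfolding f_def by simp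
  have "f u \<le> 0"
  proof (cases "be \<ge> 0")
    case True
    hence "be * u \<le> be * u2" using assms(2) by (simp add: mult_left_mono)
    thus ?thesis using \<open>f u2 \<le> 0\<close> unfolding f by linarith
  next
    case False
    hence "be * u \<le> be * u1" using assms(1) by (simp add: mult_left_mono_neg)
    thus ?thesis using \<open>f u1 \<le> 0\<close> unfolding f by linarith
  qed
  thus ?thesis using le[OF edist_nonneg edist_nonneg] unfolding f_def by simp
qed



definition avg :: "real set \<Rightarrow> real" where
  "avg U = (\<Sum>U) / real (card U)"

lemma avg_bounds:
  assumes "finite U" "U \<noteq> {}"
  shows "Min U \<le> avg U" "avg U \<le> Max U"
proof -
  have cp: "real (card U) > 0" using assms by (simp add: card_gt_0_iff)
  have "(\<Sum>u\<in>U. Min U) \<le> (\<Sum>u\<in>U. u)" by (rule sum_mono) (use assms in auto)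
  hence "real (card U) * Min U \<le> \<Sum>U" by simp
  thus "Min U \<le> avg U" using cp unfolding avg_def by (simp add: field_simps)
  have "(\<Sum>u\<in>U. u) \<le> (\<Sum>u\<in>U. Max U)" by (rule sum_mono) (use assms in auto)
  hence "\<Sum>U \<le> real (card U) * Max U" by simp
  thus "avg U \<le> Max U" using cp unfolding avg_def by (simp add: field_simps)
qed

lemma F_lip:
  assumes "finite C" "C \<noteq> {}"
  shows "\<bar>distC d (lpt a v u) C - distC d (lpt a v w) C\<bar> \<le> nrm d v * \<bar>u - w\<bar>"
  using distC_lip[OF assms, of d "lpt a v u" "lpt a v w"] edist_lpt[of d a v u w] by simp

lemma err_pt:
  assumes C: "finite C" "C \<noteq> {}" and U: "finite U" "U \<noteq> {}" and S: "SU \<subseteq> U"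
  shows "\<bar>\<Sum>u\<in>SU. distC d (lpt a v u) C - distC d (lpt a v (avg U)) C\<bar> \<le> (\<Sum>u\<in>SU. nrm d v * \<bar>u - avg U\<bar>)"
proof -
  have "\<bar>\<Sum>u\<in>SU. distC d (lpt a v u) C - distC d (lpt a v (avg U)) C\<bar> \<le> (\<Sum>u\<in>SU. \<bar>distC d (lpt a v u) C - distC d (lpt a v (avg U)) C\<bar>)"
    by (rule sum_abs)
  also have "\<dots> \<le> (\<Sum>u\<in>SU. nrm d v * \<bar>u - avg U\<bar>)"
    by (rule sum_mono) (rule F_lip[OF C])
  finally show ?thesis .
qed



lemma line_bound:
  fixes UU :: "real set set" and SU :: "real set \<Rightarrow> real set"
  assumes np: "nrm d v > 0" and C: "finite C" "C \<noteq> {}" and T0: "T \<ge> 0" and ws0: "ws \<ge> 0"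
    and fin: "finite UU"
    and Uf: "\<forall>U\<in>UU. finite U \<and> U \<noteq> {}"
    and disj: "\<forall>U\<in>UU. \<forall>U'\<in>UU. U \<noteq> U' \<longrightarrow> (\<forall>z. \<not> (Min U \<le> z \<and> z \<le> Max U \<and> Min U' \<le> z \<and> z \<le> Max U'))"
    and SUs: "\<forall>U\<in>UU. SU U \<subseteq> U"
    and thr: "\<forall>U\<in>UU. SU U \<noteq> {} \<and> SU U \<noteq> U \<longrightarrow> (\<exists>z c. Min U \<le> z \<and> z \<le> Max U \<and> c \<in> C \<and> edist d (lpt a v z) c = th)"
    and typs: "\<forall>U\<in>UU. nrm d v * (Max U - Min U) \<le> ws \<or> nrm d v * (\<Sum>u\<in>U. \<bar>u - avg U\<bar>) \<le> T"
  shows "(\<Sum>U\<in>UU. \<bar>\<Sum>u\<in>SU U. distC d (lpt a v u) C - distC d (lpt a v (avg U)) C\<bar>)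
          \<le> (\<Sum>U\<in>UU. real (card (SU U)) * ws) + 4 * real (card C) * T"
proof -
  define F where "F u = distC d (lpt a v u) C" for u
  define h where "h c u = edist d (lpt a v u) c" for c u
  define I where "I c = {u. \<forall>c'\<in>C. h c u \<le> h c' u}" for c
  define Zt where "Zt = (\<Union>c\<in>C. {u. h c u = th})"
  define Zv where "Zv = (\<lambda>c. Sup (I c)) ` C"
  define Z where "Z = Zt \<union> Zv"
  define nv where "nv = nrm d v"
  have nv: "nv > 0" using np by (simp add: nv_def)
  have finZt: "finite Zt" unfolding Zt_def h_def using C(1) roots_card[OF np] by auto
  have cZt: "card Zt \<le> 2 * card C"
  proof -
    have "card Zt \<le> (\<Sum>c\<in>C. card {u. h c u = th})" unfolding Zt_def by (rule card_UN_le[OF C(1)])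
    also have "\<dots> \<le> (\<Sum>c\<in>C. 2)" by (rule sum_mono) (use roots_card[OF np] in \<open>auto simp: h_def\<close>)
    finally show ?thesis by simp
  qed
  have finZ: "finite Z" using finZt C(1) by (simp add: Z_def Zv_def)
  have cZ: "card Z \<le> 3 * card C"
  proof -
    have "card Z \<le> card Zt + card Zv" unfolding Z_def by (rule card_Un_le)
    moreover have "card Zv \<le> card C" unfolding Zv_def by (rule card_image_le[OF C(1)])
    ultimately show ?thesis using cZt by linarith
  qed
  define bad where "bad U \<longleftrightarrow> (\<exists>z\<in>Z. Min U \<le> z \<and> z \<le> Max U)" for U
  define isA where "isA U \<longleftrightarrow> nv * (Max U - Min U) \<le> ws" for U
  define err where "err U = \<bar>\<Sum>u\<in>SU U. F u - F (avg U)\<bar>" for U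
  have hc: "h c = (\<lambda>u. edist d (lpt a v u) c)" for c by (rule ext) (simp add: h_def)
  have hlip: "\<bar>h c u - h c w\<bar> \<le> nv * \<bar>u - w\<bar>" for c u w
    unfolding h_def nv_def by (rule h_lip)
  have Fh: "F u = h c u" if "u \<in> I c" "c \<in> C" for u c
  proof -
    obtain c' where c': "c' \<in> C" "F u = h c' u" using distC_att[OF C] unfolding F_def h_def by blast
    have "F u \<le> h c u" using distC_le[OF C(1) that(2)] unfolding F_def h_def .
    moreover have "h c u \<le> h c' u" using that c' unfolding I_def by auto
    ultimately show ?thesis using c' by simp
  qed
  have errpt: "err U \<le> real (card (SU U)) * (nv * (Max U - Min U))" if U: "U \<in> UU" for U
  proof -
    have fU: "finite U" "U \<noteq> {}" using Uf U by auto
    have "err U \<le> (\<Sum>u\<in>SU U. nv * \<bar>u - avg U\<bar>)"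
      unfolding err_def F_def nv_def using err_pt[OF C fU] SUs U by blast
    also have "\<dots> \<le> (\<Sum>u\<in>SU U. nv * (Max U - Min U))"
    proof (rule sum_mono)
      fix u assume "u \<in> SU U"
      hence "u \<in> U" using SUs U by auto
      hence "Min U \<le> u" "u \<le> Max U" using fU by auto
      hence "\<bar>u - avg U\<bar> \<le> Max U - Min U" using avg_bounds[OF fU] by auto
      thus "nv * \<bar>u - avg U\<bar> \<le> nv * (Max U - Min U)" using nv by simp
    qed
    finally show ?thesis by simp
  qed
  have errB: "err U \<le> nv * (\<Sum>u\<in>U. \<bar>u - avg U\<bar>)" if U: "U \<in> UU" for U
  proof -
    have fU: "finite U" "U \<noteq> {}" using Uf U by auto
    have "err U \<le> (\<Sum>u\<in>SU U. nv * \<bar>u - avg U\<bar>)"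
      unfolding err_def F_def nv_def using err_pt[OF C fU] SUs U by blast
    also have "\<dots> \<le> (\<Sum>u\<in>U. nv * \<bar>u - avg U\<bar>)"
      by (rule sum_mono2) (use fU SUs U nv in auto)
    finally show ?thesis by (simp add: sum_distrib_left)
  qed
  have good: "\<exists>c\<in>C. \<forall>z. Min U \<le> z \<and> z \<le> Max U \<longrightarrow> z \<in> I c" if U: "U \<in> UU" "\<not> bad U" for U
  proof -
    obtain c where c: "c \<in> C" "F (Min U) = h c (Min U)" using distC_att[OF C] unfolding F_def h_def by blast
    have mI: "Min U \<in> I c" unfolding I_def
    proof (safe)
      fix c' assume "c' \<in> C"
      thus "h c (Min U) \<le> h c' (Min U)" using c distC_le[OF C(1)] unfolding F_def h_def by metis
    qed
    show ?thesis
    proof (rule bexI[OF _ c(1)], rule ccontr)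
      assume "\<not> (\<forall>z. Min U \<le> z \<and> z \<le> Max U \<longrightarrow> z \<in> I c)"
      then obtain z where z: "Min U \<le> z" "z \<le> Max U" "z \<notin> I c" by blast
      have lt: "w < z" if w: "w \<in> I c" for w
      proof (rule ccontr)
        assume "\<not> w < z"
        hence "z \<le> w" by simp
        have "z \<in> I c" unfolding I_def
        proof safe
          fix c' assume "c' \<in> C"
          have "h c (Min U) \<le> h c' (Min U)" "h c w \<le> h c' w" using mI w \<open>c' \<in> C\<close> unfolding I_def by auto
          thus "h c z \<le> h c' z" using cell_conv[of "Min U" z w d a v c c'] z(1) \<open>z \<le> w\<close> unfolding h_def by blast
        qed
        thus False using z(3) by simp
      qed
      have bdd: "bdd_above (I c)" using lt by (meson bdd_above.unfold less_imp_le)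
      have "Min U \<le> Sup (I c)" using cSup_upper[OF mI bdd] .
      moreover have "Sup (I c) \<le> z" using mI lt by (intro cSup_least) (auto intro: less_imp_le)
      moreover have "Sup (I c) \<in> Z" using c(1) by (simp add: Z_def Zv_def)
      ultimately have "bad U" unfolding bad_def using z by (meson order_trans)
      thus False using U by simp
    qed
  qed
  define cc where "cc U = (SOME c. c \<in> C \<and> (\<forall>z. Min U \<le> z \<and> z \<le> Max U \<longrightarrow> z \<in> I c))" for U
  have ccP: "cc U \<in> C \<and> (\<forall>z. Min U \<le> z \<and> z \<le> Max U \<longrightarrow> z \<in> I (cc U))" if "U \<in> UU" "\<not> bad U" for U
    unfolding cc_def by (rule someI_ex[of "\<lambda>c. c \<in> C \<and> (\<forall>z. Min U \<le> z \<and> z \<le> Max U \<longrightarrow> z \<in> I c)"]) (use good[OF that] in blast)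
  define sm where "sm c U = sl (h c) (Min U) (avg U)" for c U
  define sp where "sp c U = sl (h c) (avg U) (Max U)" for c U
  define G where "G = {U\<in>UU. \<not> isA U \<and> \<not> bad U \<and> Min U < Max U \<and> SU U = U}"
  define e1 where "e1 U = (if isA U then real (card (SU U)) * ws else 0)" for U
  define e2 where "e2 U = (if bad U then T else 0)" for U
  define e3 where "e3 U = (if U \<in> G then T / (2 * nv) * (sp (cc U) U - sm (cc U) U) else 0)" for U
  have spm: "sm c U \<le> sp c U" "avg U < Max U" "Min U < avg U"
    "\<bar>\<Sum>u\<in>U. h c u - h c (avg U)\<bar> \<le> (\<Sum>u\<in>U. \<bar>u - avg U\<bar>) / 2 * (sp c U - sm c U)"
    if "U \<in> UU" "Min U < Max U" for U c
    using gap_bound[OF h_convex[of d a v c], of U] that Uf unfolding sm_def sp_def avg_def h_def by auto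
  have per: "err U \<le> e1 U + e2 U + e3 U" if U: "U \<in> UU" for U
  proof -
    have fU: "finite U" "U \<noteq> {}" using Uf U by auto
    have e2n: "e2 U \<ge> 0" using T0 by (simp add: e2_def)
    have e3n: "e3 U \<ge> 0"
      using spm(1)[OF U] T0 nv by (auto simp: e3_def G_def)
    have e1n: "e1 U \<ge> 0" using ws0 by (simp add: e1_def)
    show ?thesis
    proof (cases "isA U")
      case True
      have "err U \<le> real (card (SU U)) * ws"
        using errpt[OF U] True unfolding isA_def by (meson mult_left_mono of_nat_0_le_iff order_trans)
      thus ?thesis using True e2n e3n by (simp add: e1_def)
    next
      case nA: False
      hence B: "nv * (\<Sum>u\<in>U. \<bar>u - avg U\<bar>) \<le> T" using typs U unfolding isA_def nv_def by auto
      show ?thesis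
      proof (cases "bad U")
        case True
        thus ?thesis using errB[OF U] B e1n e3n by (simp add: e2_def)
      next
        case nb: False
        have SUc: "SU U = {} \<or> SU U = U"
        proof (rule ccontr)
          assume "\<not> (SU U = {} \<or> SU U = U)"
          then obtain z c where "Min U \<le> z" "z \<le> Max U" "c \<in> C" "edist d (lpt a v z) c = th"
            using thr U by blast
          hence "bad U" unfolding bad_def Z_def Zt_def h_def by blast
          thus False using nb by simp
        qed
        show ?thesis
        proof (cases "SU U = U \<and> Min U < Max U")
          case False
          have "err U \<le> 0"
          proof (cases "SU U = {}")
            case True thus ?thesis by (simp add: err_def)
          next
            case False
            hence "Min U = Max U" using SUc \<open>\<not> (SU U = U \<and> Min U < Max U)\<close> fU
              by (metis Max_in Min_le fU(1) fU(2) order_less_le)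
            thus ?thesis using errpt[OF U] by simp
          qed
          thus ?thesis using e1n e2n e3n by linarith
        next
          case True
          hence UG: "U \<in> G" using U nA nb by (simp add: G_def)
          let ?c = "cc U"
          have cP: "?c \<in> C" "\<And>z. Min U \<le> z \<Longrightarrow> z \<le> Max U \<Longrightarrow> z \<in> I ?c" using ccP[OF U nb] by auto
          have "err U = \<bar>\<Sum>u\<in>U. h ?c u - h ?c (avg U)\<bar>"
          proof -
            have av: "F (avg U) = h ?c (avg U)"
              using Fh cP avg_bounds[OF fU] by auto
            have "(\<Sum>u\<in>SU U. F u - F (avg U)) = (\<Sum>u\<in>U. h ?c u - h ?c (avg U))"
              using True fU by (intro sum.cong) (auto simp: av intro!: Fh cP)
            thus ?thesis by (simp add: err_def)
          qed
          also have "\<dots> \<le> (\<Sum>u\<in>U. \<bar>u - avg U\<bar>) / 2 * (sp ?c U - sm ?c U)"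
            using spm(4)[OF U] True by blast
          also have "\<dots> \<le> T / (2 * nv) * (sp ?c U - sm ?c U)"
          proof (rule mult_right_mono)
            show "0 \<le> sp ?c U - sm ?c U" using spm(1)[OF U] True by simp
            have "(\<Sum>u\<in>U. \<bar>u - avg U\<bar>) \<le> T / nv" using B nv by (simp add: field_simps)
            thus "(\<Sum>u\<in>U. \<bar>u - avg U\<bar>) / 2 \<le> T / (2 * nv)" by (simp add: field_simps)
          qed
          finally show ?thesis using UG e1n e2n by (simp add: e3_def)
        qed
      qed
    qed
  qed
  have s1: "(\<Sum>U\<in>UU. e1 U) \<le> (\<Sum>U\<in>UU. real (card (SU U)) * ws)"
    by (rule sum_mono) (use ws0 in \<open>auto simp: e1_def\<close>)
  have s2: "(\<Sum>U\<in>UU. e2 U) \<le> 3 * real (card C) * T"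
  proof -
    have "(\<Sum>U\<in>UU. e2 U) = (\<Sum>U\<in>{U\<in>UU. bad U}. T)"
      unfolding e2_def by (rule sum.inter_filter[OF fin, symmetric])
    also have "\<dots> = real (card {U\<in>UU. bad U}) * T" by simp
    also have "\<dots> \<le> real (3 * card C) * T"
    proof (rule mult_right_mono[OF _ T0])
      define f where "f U = (SOME z. z \<in> Z \<and> Min U \<le> z \<and> z \<le> Max U)" for U
      have fP: "f U \<in> Z \<and> Min U \<le> f U \<and> f U \<le> Max U" if "bad U" for U
        unfolding f_def by (rule someI_ex[of "\<lambda>z. z \<in> Z \<and> Min U \<le> z \<and> z \<le> Max U"]) (use that in \<open>auto simp: bad_def\<close>)
      have "inj_on f {U\<in>UU. bad U}"
      proof (rule inj_onI)
        fix U U' assume "U \<in> {U\<in>UU. bad U}" "U' \<in> {U\<in>UU. bad U}" "f U = f U'"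
        show "U = U'"
        proof (rule ccontr)
          assume ne: "U \<noteq> U'"
          have "U \<in> UU" "U' \<in> UU" "bad U" "bad U'" using \<open>U \<in> {U\<in>UU. bad U}\<close> \<open>U' \<in> {U\<in>UU. bad U}\<close> by auto
          hence "\<not> (Min U \<le> f U \<and> f U \<le> Max U \<and> Min U' \<le> f U \<and> f U \<le> Max U')" using disj ne by blast
          thus False using fP[OF \<open>bad U\<close>] fP[OF \<open>bad U'\<close>] \<open>f U = f U'\<close> by auto
        qed
      qed
      moreover have "f ` {U\<in>UU. bad U} \<subseteq> Z" using fP by auto
      ultimately have "card {U\<in>UU. bad U} \<le> card Z" using finZ by (rule card_inj_on_le)
      thus "real (card {U\<in>UU. bad U}) \<le> real (3 * card C)" using cZ by linarith
    qed
    finally show ?thesis by simp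
  qed
  have s3: "(\<Sum>U\<in>UU. e3 U) \<le> real (card C) * T"
  proof -
    have GU: "G \<subseteq> UU" by (auto simp: G_def)
    have "(\<Sum>U\<in>UU. e3 U) = (\<Sum>U\<in>G. T / (2 * nv) * (sp (cc U) U - sm (cc U) U))"
    proof -
      have "(\<Sum>U\<in>UU. e3 U) = (\<Sum>U\<in>{U\<in>UU. U \<in> G}. T / (2 * nv) * (sp (cc U) U - sm (cc U) U))"
        unfolding e3_def by (rule sum.inter_filter[OF fin, symmetric])
      moreover have "{U\<in>UU. U \<in> G} = G" using GU by auto
      ultimately show ?thesis by simp
    qed
    also have "\<dots> = (\<Sum>c\<in>C. \<Sum>U\<in>{U. U \<in> G \<and> cc U = c}. T / (2 * nv) * (sp (cc U) U - sm (cc U) U))"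
    proof (rule sum.group[symmetric])
      show "finite G" using fin GU finite_subset by auto
      show "finite C" using C by simp
      show "cc ` G \<subseteq> C" using ccP by (auto simp: G_def)
    qed
    also have "\<dots> \<le> (\<Sum>c\<in>C. T)"
    proof (rule sum_mono)
      fix c assume cC: "c \<in> C"
      define Gc where "Gc = {U. U \<in> G \<and> cc U = c}"
      have GcU: "Gc \<subseteq> UU" using GU by (auto simp: Gc_def)
      have finGc: "finite Gc" using fin GcU finite_subset by auto
      have "(\<Sum>U\<in>Gc. T / (2 * nv) * (sp (cc U) U - sm (cc U) U)) = T / (2 * nv) * (\<Sum>U\<in>Gc. sp c U - sm c U)"
        by (simp add: sum_distrib_left Gc_def)
      also have "\<dots> \<le> T / (2 * nv) * (2 * nv)"
      proof (rule mult_left_mono)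
        show "0 \<le> T / (2 * nv)" using T0 nv by simp
        show "(\<Sum>U\<in>Gc. sp c U - sm c U) \<le> 2 * nv"
        proof (rule tel[OF finGc, where key = Min])
          show "inj_on Min Gc"
          proof (rule inj_onI)
            fix U U' assume "U \<in> Gc" "U' \<in> Gc" "Min U = Min U'"
            moreover have "Min U \<le> Max U" if "U \<in> Gc" for U using that GcU Uf by auto
            ultimately show "U = U'"
            proof -
              assume a: "U \<in> Gc" "U' \<in> Gc" "Min U = Min U'" and mm: "\<And>U. U \<in> Gc \<Longrightarrow> Min U \<le> Max U"
              show "U = U'"
              proof (rule ccontr)
                assume ne: "U \<noteq> U'"
                have "U \<in> UU" "U' \<in> UU" using a GcU by auto
                hence "\<not> (Min U \<le> Min U \<and> Min U \<le> Max U \<and> Min U' \<le> Min U \<and> Min U \<le> Max U')" using disj ne by blast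
                thus False using mm[OF a(1)] mm[OF a(2)] a(3) by auto
              qed
            qed
          qed
          show "sp c U \<le> sm c U'" if "U \<in> Gc" "U' \<in> Gc" "Min U < Min U'" for U U'
          proof -
            have UU: "U \<in> UU" "U' \<in> UU" using that GcU by auto
            have ne: "U \<noteq> U'" using that(3) by auto
            have lt: "Min U < Max U" "Min U' < Max U'" using that by (auto simp: Gc_def G_def)
            have "Max U < Min U'"
            proof (rule ccontr)
              assume "\<not> Max U < Min U'"
              hence "Min U' \<le> Max U" by simp
              moreover have "\<not> (Min U \<le> Min U' \<and> Min U' \<le> Max U \<and> Min U' \<le> Min U' \<and> Min U' \<le> Max U')"
                using disj UU ne by blast
              ultimately show False using that(3) lt(2) by auto
            qed
            thus ?thesis unfolding sp_def sm_def
              using sl_le_mono[OF h_convex[of d a v c, folded h_def], of "avg U" "Max U" "Min U'" "avg U'"]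
                spm(2)[OF UU(1) lt(1)] spm(3)[OF UU(2) lt(2)] by (simp add: hc)
          qed
          have slb: "\<bar>sl (h c) x y\<bar> \<le> nv" if "x \<noteq> y" for x y
            by (rule sl_bound[OF hlip that])
          show "- nv \<le> sm c U" if "U \<in> Gc" for U
          proof -
            have "U \<in> UU" "Min U < Max U" using that GcU by (auto simp: Gc_def G_def)
            hence "Min U \<noteq> avg U" using spm(3) by force
            thus ?thesis using slb[of "Min U" "avg U"] unfolding sm_def by (simp add: abs_le_iff)
          qed
          show "sp c U \<le> nv" if "U \<in> Gc" for U
          proof -
            have "U \<in> UU" "Min U < Max U" using that GcU by (auto simp: Gc_def G_def)
            hence "avg U \<noteq> Max U" using spm(2) by force
            thus ?thesis using slb[of "avg U" "Max U"] unfolding sp_def by (simp add: abs_le_iff)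
          qed
          show "0 \<le> nv" using nv by simp
        qed
      qed
      also have "\<dots> = T" using nv by simp
      finally show "(\<Sum>U\<in>{U. U \<in> G \<and> cc U = c}. T / (2 * nv) * (sp (cc U) U - sm (cc U) U)) \<le> T"
        by (simp add: Gc_def)
    qed
    also have "\<dots> = real (card C) * T" by simp
    finally show ?thesis .
  qed
  have "(\<Sum>U\<in>UU. err U) \<le> (\<Sum>U\<in>UU. e1 U + e2 U + e3 U)" by (rule sum_mono) (rule per)
  also have "\<dots> = (\<Sum>U\<in>UU. e1 U) + (\<Sum>U\<in>UU. e2 U) + (\<Sum>U\<in>UU. e3 U)" by (simp add: sum.distrib)
  finally have "(\<Sum>U\<in>UU. err U) \<le> (\<Sum>U\<in>UU. real (card (SU U)) * ws) + 4 * real (card C) * T"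
    using s1 s2 s3 by linarith
  thus ?thesis unfolding err_def F_def .
qed



lemma nrm_pos:
  assumes "in_Rd d v" "v \<noteq> (\<lambda>i. 0)"
  shows "nrm d v > 0"
proof -
  obtain i where i: "v i \<noteq> 0" using assms(2) by auto
  hence "i < d" using assms(1) unfolding in_Rd_def by (meson not_le)
  have "(\<Sum>j<d. (v j)^2) \<ge> (\<Sum>j\<in>{i}. (v j)^2)"
    by (rule sum_mono2) (use \<open>i < d\<close> in auto)
  hence "(\<Sum>j<d. (v j)^2) \<ge> (v i)^2" by simp
  moreover have "(v i)^2 > 0" using i by simp
  ultimately have "(\<Sum>j<d. (v j)^2) > 0" by linarith
  thus ?thesis unfolding nrm_def by simp
qed

lemma lpt_inj: "nrm d v > 0 \<Longrightarrow> inj (lpt a v)"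
proof (rule injI)
  fix u w assume np: "nrm d v > 0" and e: "lpt a v u = lpt a v w"
  have "edist d (lpt a v u) (lpt a v w) = 0" using e by (simp add: edist_def)
  thus "u = w" using edist_lpt[of d a v u w] np by simp
qed

lemma sum_lpt:
  assumes inj: "inj (lpt a v)" and fin: "finite U"
  shows "(\<Sum>y\<in>lpt a v ` U. f y) = (\<Sum>u\<in>U. f (lpt a v u))"
  using sum.reindex[OF inj_on_subset[OF inj subset_UNIV], of f] by simp

lemma mu_lpt:
  assumes inj: "inj (lpt a v)" and fin: "finite U" and ne: "U \<noteq> {}"
  shows "mu (lpt a v ` U) = lpt a v (avg U)"
proof (rule ext)
  fix i
  have cU: "card (lpt a v ` U) = card U" using card_image[OF inj_on_subset[OF inj subset_UNIV]] .
  have cp: "real (card U) > 0" using fin ne by (simp add: card_gt_0_iff)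
  have "(\<Sum>y\<in>lpt a v ` U. y i) = (\<Sum>u\<in>U. a i + u * v i)"
    using sum_lpt[OF inj fin, of "\<lambda>y. y i"] by (simp add: lpt_def)
  also have "\<dots> = real (card U) * a i + (\<Sum>U) * v i" by (simp add: sum.distrib sum_distrib_right)
  finally show "mu (lpt a v ` U) i = lpt a v (avg U) i"
    unfolding mu_def cU lpt_def avg_def using cp by (simp add: field_simps)
qed

lemma delta_lpt:
  assumes inj: "inj (lpt a v)" and fin: "finite U" and ne: "U \<noteq> {}"
  shows "delta d (lpt a v ` U) = nrm d v * (\<Sum>u\<in>U. \<bar>u - avg U\<bar>)"
  unfolding delta_def mu_lpt[OF assms] sum_lpt[OF inj fin] edist_lpt by (simp add: sum_distrib_left)

lemma segI_lpt1:
  assumes fin: "finite U" and ne: "U \<noteq> {}" and z: "Min U \<le> z" "z \<le> Max U"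
  shows "lpt a v z \<in> segI (lpt a v ` U)"
proof (cases "Min U = Max U")
  case True
  hence "z = Min U" using z by simp
  moreover have "Min U \<in> U" using fin ne by simp
  ultimately show ?thesis unfolding segI_def
    by (intro CollectI bexI[of _ "lpt a v z"] bexI[of _ 0]) (auto simp: lpt_def)
next
  case False
  hence lt: "Min U < Max U" using fin ne by (meson Max_ge Min_in le_less)
  define t where "t = (z - Min U) / (Max U - Min U)"
  have t: "t \<in> {0..1}" using z lt by (auto simp: t_def field_simps)
  have e0: "t * (Max U - Min U) = z - Min U" using lt by (simp add: t_def)
  have "(1 - t) * Min U + t * Max U = Min U + t * (Max U - Min U)" by (simp add: algebra_simps)
  hence ze: "z = (1 - t) * Min U + t * Max U" using e0 by simp
  have "lpt a v z = (\<lambda>i. (1 - t) * lpt a v (Min U) i + t * lpt a v (Max U) i)"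
    unfolding ze by (rule lpt_conv)
  moreover have "Min U \<in> U" "Max U \<in> U" using fin ne by auto
  ultimately show ?thesis unfolding segI_def using t by blast
qed

lemma segI_lpt2:
  assumes fin: "finite U" and ne: "U \<noteq> {}" and x: "x \<in> segI (lpt a v ` U)"
  shows "\<exists>z. Min U \<le> z \<and> z \<le> Max U \<and> x = lpt a v z"
proof -
  obtain u w t where uw: "u \<in> U" "w \<in> U" "t \<in> {0..1}" "x = (\<lambda>i. (1 - t) * lpt a v u i + t * lpt a v w i)"
    using x unfolding segI_def by blast
  hence "x = lpt a v ((1 - t) * u + t * w)" by (simp only: lpt_conv)
  moreover have "Min U \<le> (1 - t) * u + t * w" "(1 - t) * u + t * w \<le> Max U"
  proof -
    have b: "Min U \<le> u" "u \<le> Max U" "Min U \<le> w" "w \<le> Max U" using uw fin by auto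
    have t: "0 \<le> t" "t \<le> 1" using uw by auto
    have "(1 - t) * Min U \<le> (1 - t) * u" "t * Min U \<le> t * w" using b t by (auto intro: mult_left_mono)
    thus "Min U \<le> (1 - t) * u + t * w" by (simp add: algebra_simps)
    have "(1 - t) * u \<le> (1 - t) * Max U" "t * w \<le> t * Max U" using b t by (auto intro: mult_left_mono)
    thus "(1 - t) * u + t * w \<le> Max U" by (simp add: algebra_simps)
  qed
  ultimately show ?thesis by blast
qed

lemma sup2_upper:
  fixes f :: "'a \<Rightarrow> 'a \<Rightarrow> real"
  assumes B: "\<And>x y. x \<in> S \<Longrightarrow> y \<in> S \<Longrightarrow> f x y \<le> B" and xy: "x \<in> S" "y \<in> S"
  shows "f x y \<le> (SUP a\<in>S. SUP b\<in>S. f a b)"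
proof -
  have b1: "bdd_above (f a ` S)" if "a \<in> S" for a using B that by (auto intro!: bdd_aboveI2)
  have "(SUP b\<in>S. f a b) \<le> B" if "a \<in> S" for a using B that by (intro cSUP_least) auto
  hence b2: "bdd_above ((\<lambda>a. SUP b\<in>S. f a b) ` S)" by (auto intro!: bdd_aboveI2)
  have "f x y \<le> (SUP b\<in>S. f x b)" by (rule cSUP_upper[OF xy(2) b1[OF xy(1)]])
  also have "\<dots> \<le> (SUP a\<in>S. SUP b\<in>S. f a b)" by (rule cSUP_upper[OF xy(1) b2])
  finally show ?thesis .
qed

lemma seglen_lpt:
  assumes fin: "finite U" and ne: "U \<noteq> {}"
  shows "nrm d v * (Max U - Min U) \<le> seglen d (segI (lpt a v ` U))"
proof -
  let ?S = "segI (lpt a v ` U)"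
  have B: "edist d x y \<le> nrm d v * (Max U - Min U)" if xS: "x \<in> ?S" and yS: "y \<in> ?S" for x y
  proof -
    obtain z w where "Min U \<le> z" "z \<le> Max U" "x = lpt a v z" "Min U \<le> w" "w \<le> Max U" "y = lpt a v w"
      using segI_lpt2[OF fin ne xS] segI_lpt2[OF fin ne yS] by blast
    moreover have "nrm d v \<ge> 0" by (simp add: nrm_def sum_nonneg)
    ultimately show ?thesis using edist_lpt[of d a v z w] by (auto intro!: mult_left_mono)
  qed
  have "edist d (lpt a v (Max U)) (lpt a v (Min U)) \<le> seglen d ?S"
    unfolding seglen_def
    by (rule sup2_upper[OF B]) (use segI_lpt1[OF fin ne] fin ne in auto)
  thus ?thesis using edist_lpt[of d a v "Max U" "Min U"] fin ne by simp
qed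

lemma sub_segI: "Y \<subseteq> segI Y"
proof
  fix y assume "y \<in> Y"
  moreover have "y = (\<lambda>i. (1 - 0) * y i + 0 * y i)" by simp
  moreover have "(0::real) \<in> {0..1}" by simp
  ultimately show "y \<in> segI Y" unfolding segI_def by blast
qed

lemma mset_set_UN:
  assumes "finite A" "\<forall>a\<in>A. finite (B a)" "\<forall>a\<in>A. \<forall>a'\<in>A. a \<noteq> a' \<longrightarrow> B a \<inter> B a' = {}"
  shows "mset_set (\<Union>a\<in>A. B a) = (\<Sum>a\<in>A. mset_set (B a))"
  using assms
proof (induction A rule: finite_induct)
  case empty thus ?case by simp
next
  case (insert x F)
  have "mset_set (\<Union>a\<in>insert x F. B a) = mset_set (B x \<union> (\<Union>a\<in>F. B a))" by simp
  also have "\<dots> = mset_set (B x) + mset_set (\<Union>a\<in>F. B a)"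
    by (rule mset_set_Union) (use insert in auto)
  also have "\<dots> = mset_set (B x) + (\<Sum>a\<in>F. mset_set (B a))" using insert by simp
  finally show ?case using insert by simp
qed

lemma image_mset_sum: "image_mset f (\<Sum>a\<in>A. M a) = (\<Sum>a\<in>A. image_mset f (M a))"
  by (induction A rule: infinite_finite_induct) auto



lemma main_bound:
  fixes \<alpha> \<epsilon> s :: real and d k p :: nat and X :: "pt set" and L :: "pt set set"
    and t :: "pt set \<Rightarrow> real" and Xl :: "pt set \<Rightarrow> pt set" and Ys :: "pt set \<Rightarrow> pt set set" and C :: "pt set"
  assumes \<alpha>: "\<alpha> > 0" and k1: "k \<ge> 1" and e0: "0 < \<epsilon>"
    and finX: "finite X" and p1: "1 \<le> p" and pX: "p \<le> card X"
    and finL: "finite L" and lines: "\<forall>l\<in>L. is_line d l" and s0: "s > 0" and t0: "\<forall>l\<in>L. t l > 0"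
    and UX: "(\<Union>l\<in>L. Xl l) = X" and Xll: "\<forall>l\<in>L. Xl l \<subseteq> l"
    and Xdisj: "\<forall>l\<in>L. \<forall>l'\<in>L. l \<noteq> l' \<longrightarrow> Xl l \<inter> Xl l' = {}"
    and Yp: "\<forall>l\<in>L. \<Union>(Ys l) = Xl l \<and> (\<forall>Y\<in>Ys l. Y \<noteq> {}) \<and>
         (\<forall>Y\<in>Ys l. \<forall>Y'\<in>Ys l. Y \<noteq> Y' \<longrightarrow> segI Y \<inter> segI Y' = {}) \<and>
         (\<forall>Y\<in>Ys l. seglen d (segI Y) \<le> \<alpha> * \<epsilon> / real p * s
                    \<or> delta d Y \<le> \<alpha> * \<epsilon> / real k * t l)"
    and finC: "finite C" and cC: "card C = k"
  shows "\<bar>costp d p (\<Sum>l\<in>L. \<Sum>Y\<in>Ys l. replicate_mset (card Y) (mu Y)) C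
        - costp d p (mset_set X) C\<bar> \<le> 5 * \<alpha> * \<epsilon> * (s + (\<Sum>l\<in>L. t l))"
proof -
  have Cne: "C \<noteq> {}" using cC k1 by auto
  have kpos: "real k > 0" using k1 by simp
  have ppos: "real p > 0" using p1 by simp
  have "\<forall>l\<in>L. \<exists>av. in_Rd d (fst av) \<and> in_Rd d (snd av) \<and> snd av \<noteq> (\<lambda>i. 0) \<and> l = range (lpt (fst av) (snd av))"
  proof
    fix l assume "l \<in> L"
    then obtain a v where "in_Rd d a" "in_Rd d v" "v \<noteq> (\<lambda>i. 0)" "l = {(\<lambda>i. a i + t * v i) | t. True}"
      using lines unfolding is_line_def by blast
    moreover have "{(\<lambda>i. a i + t * v i) | t. True} = range (lpt a v)" by (auto simp: lpt_def)
    ultimately show "\<exists>av. in_Rd d (fst av) \<and> in_Rd d (snd av) \<and> snd av \<noteq> (\<lambda>i. 0) \<and> l = range (lpt (fst av) (snd av))"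
      by (intro exI[of _ "(a, v)"]) auto
  qed
  then obtain AV where AV: "\<forall>l\<in>L. in_Rd d (fst (AV l)) \<and> in_Rd d (snd (AV l)) \<and> snd (AV l) \<noteq> (\<lambda>i. 0) \<and> l = range (lpt (fst (AV l)) (snd (AV l)))"
    by metis
  define al where "al l = fst (AV l)" for l
  define vl where "vl l = snd (AV l)" for l
  define ph where "ph l = lpt (al l) (vl l)" for l
  have np: "nrm d (vl l) > 0" if "l \<in> L" for l using AV that nrm_pos unfolding vl_def by blast
  have inj: "inj (ph l)" if "l \<in> L" for l unfolding ph_def using lpt_inj[OF np[OF that]] .
  have lrange: "l = range (ph l)" if "l \<in> L" for l using AV that unfolding ph_def al_def vl_def by blast
  have YpL: "\<Union>(Ys l) = Xl l \<and> (\<forall>Y\<in>Ys l. Y \<noteq> {}) \<and>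
         (\<forall>Y\<in>Ys l. \<forall>Y'\<in>Ys l. Y \<noteq> Y' \<longrightarrow> segI Y \<inter> segI Y' = {}) \<and>
         (\<forall>Y\<in>Ys l. seglen d (segI Y) \<le> \<alpha> * \<epsilon> / real p * s
                    \<or> delta d Y \<le> \<alpha> * \<epsilon> / real k * t l)" if "l \<in> L" for l
    by (rule bspec[OF Yp that])
  have Yp1: "\<Union>(Ys l) = Xl l" if "l \<in> L" for l using YpL[OF that] by (rule conjunct1)
  have Yp3: "segI Y \<inter> segI Y' = {}" if "l \<in> L" "Y \<in> Ys l" "Y' \<in> Ys l" "Y \<noteq> Y'" for l Y Y'
    using YpL[OF that(1)] that(2-4) by blast
  have Yp4: "seglen d (segI Y) \<le> \<alpha> * \<epsilon> / real p * s \<or> delta d Y \<le> \<alpha> * \<epsilon> / real k * t l"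
    if "l \<in> L" "Y \<in> Ys l" for l Y
    using YpL[OF that(1)] that(2) by blast
  have YX: "Y \<subseteq> Xl l" if "l \<in> L" "Y \<in> Ys l" for l Y using Yp1[OF that(1)] that(2) by blast
  have XlX: "Xl l \<subseteq> X" if "l \<in> L" for l using UX that by blast
  have finXl: "finite (Xl l)" if "l \<in> L" for l using XlX[OF that] finX finite_subset by blast
  have finYs: "finite (Ys l)" if "l \<in> L" for l
  proof -
    have "Ys l \<subseteq> Pow (Xl l)" using YX[OF that] by blast
    thus ?thesis using finXl[OF that] finite_subset by blast
  qed
  have finY: "finite Y" if "l \<in> L" "Y \<in> Ys l" for l Y using YX[OF that] finXl[OF that(1)] finite_subset by blast
  have Yne: "Y \<noteq> {}" if "l \<in> L" "Y \<in> Ys l" for l Y using YpL[OF that(1)] that(2) by blast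
  define UU where "UU l Y = {u. ph l u \<in> Y}" for l Y
  have UUm: "u \<in> UU l Y \<longleftrightarrow> ph l u \<in> Y" for l Y u by (simp add: UU_def)
  have Yin: "\<exists>u. u \<in> UU l Y \<and> x = ph l u" if l: "l \<in> L" and Y: "Y \<in> Ys l" and x: "x \<in> Y" for l Y x
  proof -
    have "x \<in> l" using YX[OF l Y] Xll l x by blast
    then obtain u where "x = ph l u" using lrange[OF l] by blast
    thus ?thesis using x by (auto simp: UUm)
  qed
  have Yeq: "Y = ph l ` UU l Y" if "l \<in> L" "Y \<in> Ys l" for l Y
  proof
    show "Y \<subseteq> ph l ` UU l Y" using Yin[OF that] by blast
    show "ph l ` UU l Y \<subseteq> Y" by (auto simp: UUm)
  qed
  have finU: "finite (UU l Y)" if "l \<in> L" "Y \<in> Ys l" for l Y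
    unfolding UU_def using finite_vimageI[OF finY[OF that] inj[OF that(1)]] by (simp add: vimage_def)
  have Une: "UU l Y \<noteq> {}" if "l \<in> L" "Y \<in> Ys l" for l Y using Yeq[OF that] Yne[OF that] by auto
  have Ydisj: "Y \<inter> Y' = {}" if "l \<in> L" "Y \<in> Ys l" "Y' \<in> Ys l" "Y \<noteq> Y'" for l Y Y'
    using Yp3[OF that] sub_segI[of Y] sub_segI[of Y'] by blast
  have uniq: "Y = Y'" if "l \<in> L" "Y \<in> Ys l" "l' \<in> L" "Y' \<in> Ys l'" "x \<in> Y" "x \<in> Y'" for l l' Y Y' x
  proof -
    have "l = l'" using YX[OF that(1,2)] YX[OF that(3,4)] Xdisj that by blast
    thus ?thesis using Ydisj that by blast
  qed
  have injl: "inj (lpt (al l) (vl l))" if "l \<in> L" for l using inj[OF that] unfolding ph_def .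
  have muY: "mu Y = ph l (avg (UU l Y))" if l: "l \<in> L" and Y: "Y \<in> Ys l" for l Y
  proof -
    have "mu Y = mu (ph l ` UU l Y)" by (rule arg_cong[where f = mu, OF Yeq[OF l Y]])
    also have "\<dots> = ph l (avg (UU l Y))" unfolding ph_def by (rule mu_lpt[OF injl[OF l] finU[OF l Y] Une[OF l Y]])
    finally show ?thesis .
  qed
  have deltaY: "delta d Y = nrm d (vl l) * (\<Sum>u\<in>UU l Y. \<bar>u - avg (UU l Y)\<bar>)" if l: "l \<in> L" and Y: "Y \<in> Ys l" for l Y
  proof -
    have "delta d Y = delta d (ph l ` UU l Y)" by (rule arg_cong[where f = "delta d", OF Yeq[OF l Y]])
    also have "\<dots> = nrm d (vl l) * (\<Sum>u\<in>UU l Y. \<bar>u - avg (UU l Y)\<bar>)"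
      unfolding ph_def by (rule delta_lpt[OF injl[OF l] finU[OF l Y] Une[OF l Y]])
    finally show ?thesis .
  qed
  have seglenY: "nrm d (vl l) * (Max (UU l Y) - Min (UU l Y)) \<le> seglen d (segI Y)" if l: "l \<in> L" and Y: "Y \<in> Ys l" for l Y
  proof -
    have "segI Y = segI (ph l ` UU l Y)" by (rule arg_cong[where f = segI, OF Yeq[OF l Y]])
    thus ?thesis using seglen_lpt[OF finU[OF l Y] Une[OF l Y], where a = "al l" and v = "vl l" and d = d] unfolding ph_def by simp
  qed
  have segY: "ph l z \<in> segI Y" if l: "l \<in> L" and Y: "Y \<in> Ys l" and z: "Min (UU l Y) \<le> z" "z \<le> Max (UU l Y)" for l Y z
  proof -
    have "segI Y = segI (ph l ` UU l Y)" by (rule arg_cong[where f = segI, OF Yeq[OF l Y]])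
    thus ?thesis using segI_lpt1[OF finU[OF l Y] Une[OF l Y] z, where a = "al l" and v = "vl l"] unfolding ph_def by simp
  qed
  have SY: "S \<inter> Y = ph l ` {u \<in> UU l Y. ph l u \<in> S}" if l: "l \<in> L" and Y: "Y \<in> Ys l" for l Y S
  proof
    show "S \<inter> Y \<subseteq> ph l ` {u \<in> UU l Y. ph l u \<in> S}" using Yin[OF l Y] by blast
    show "ph l ` {u \<in> UU l Y. ph l u \<in> S} \<subseteq> S \<inter> Y" by (auto simp: UUm)
  qed
  define cls where "cls x = (SOME Y. \<exists>l\<in>L. Y \<in> Ys l \<and> x \<in> Y)" for x
  have clsP: "cls x = Y" if "l \<in> L" "Y \<in> Ys l" "x \<in> Y" for l Y x
  proof -
    have "\<exists>l\<in>L. cls x \<in> Ys l \<and> x \<in> cls x"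
      unfolding cls_def by (rule someI_ex[of "\<lambda>Y. \<exists>l\<in>L. Y \<in> Ys l \<and> x \<in> Y"]) (use that in blast)
    thus ?thesis using uniq that by blast
  qed
  define a where "a x = distC d x C" for x
  define b where "b x = distC d (mu (cls x)) C" for x
  define D where "D = (\<Sum>l\<in>L. \<Sum>Y\<in>Ys l. replicate_mset (card Y) (mu Y))"
  have Deq: "D = image_mset (\<lambda>x. mu (cls x)) (mset_set X)"
  proof -
    have "D = (\<Sum>l\<in>L. \<Sum>Y\<in>Ys l. image_mset (\<lambda>x. mu (cls x)) (mset_set Y))"
      unfolding D_def
    proof (intro sum.cong refl)
      fix l Y assume l: "l \<in> L" and Y: "Y \<in> Ys l"
      have "image_mset (\<lambda>x. mu (cls x)) (mset_set Y) = image_mset (\<lambda>x. mu Y) (mset_set Y)"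
        by (rule image_mset_cong) (use clsP[OF l Y] finY[OF l Y] in auto)
      also have "\<dots> = replicate_mset (card Y) (mu Y)" by (simp add: image_mset_const_eq)
      finally show "replicate_mset (card Y) (mu Y) = image_mset (\<lambda>x. mu (cls x)) (mset_set Y)" by simp
    qed
    also have "\<dots> = (\<Sum>l\<in>L. image_mset (\<lambda>x. mu (cls x)) (\<Sum>Y\<in>Ys l. mset_set Y))"
      by (simp add: image_mset_sum)
    also have "\<dots> = (\<Sum>l\<in>L. image_mset (\<lambda>x. mu (cls x)) (mset_set (Xl l)))"
    proof (intro sum.cong refl)
      fix l assume l: "l \<in> L"
      have "mset_set (\<Union>Y\<in>Ys l. Y) = (\<Sum>Y\<in>Ys l. mset_set Y)"
        by (rule mset_set_UN) (use finYs[OF l] finY[OF l] Ydisj[OF l] in auto)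
      moreover have "(\<Union>Y\<in>Ys l. Y) = Xl l" using Yp1[OF l] by auto
      ultimately show "image_mset (\<lambda>x. mu (cls x)) (\<Sum>Y\<in>Ys l. mset_set Y) = image_mset (\<lambda>x. mu (cls x)) (mset_set (Xl l))"
        by simp
    qed
    also have "\<dots> = image_mset (\<lambda>x. mu (cls x)) (\<Sum>l\<in>L. mset_set (Xl l))"
      by (simp add: image_mset_sum)
    also have "(\<Sum>l\<in>L. mset_set (Xl l)) = mset_set X"
      using mset_set_UN[OF finL, of Xl] finXl Xdisj UX by auto
    finally show ?thesis .
  qed
  have costD: "costp d p D C = sum_list (take p (rev (sorted_list_of_multiset (image_mset b (mset_set X)))))"
    unfolding costp_def Deq b_def by (simp add: multiset.map_comp o_def)
  have costX: "costp d p (mset_set X) C = sum_list (take p (rev (sorted_list_of_multiset (image_mset a (mset_set X)))))"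
    unfolding costp_def a_def by simp
  obtain Sa tha where Sa: "Sa \<subseteq> X" "card Sa = p"
    "sum_list (take p (rev (sorted_list_of_multiset (image_mset a (mset_set X))))) = sum a Sa"
    "\<forall>x\<in>Sa. tha \<le> a x" "\<forall>x\<in>X - Sa. a x \<le> tha"
    using topp_exists[OF finX p1 pX, of a] by blast
  obtain Sb thb where Sb: "Sb \<subseteq> X" "card Sb = p"
    "sum_list (take p (rev (sorted_list_of_multiset (image_mset b (mset_set X))))) = sum b Sb"
    "\<forall>x\<in>Sb. thb \<le> b x" "\<forall>x\<in>X - Sb. b x \<le> thb"
    using topp_exists[OF finX p1 pX, of b] by blast
  have ex1: "sum a Sb \<le> sum a Sa" by (rule topp_exch[OF finX Sa(1,2,4,5) Sb(1,2)])
  have ex2: "sum b Sa \<le> sum b Sb" by (rule topp_exch[OF finX Sb(1,2,4,5) Sa(1,2)])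
  define ws where "ws = \<alpha> * \<epsilon> / real p * s"
  define T where "T l = \<alpha> * \<epsilon> / real k * t l" for l
  define SU where "SU l S U = {u \<in> U. ph l u \<in> S}" for l S U
  define F where "F l u = distC d (ph l u) C" for l u
  have BND: "\<bar>\<Sum>x\<in>S. a x - b x\<bar> \<le> \<alpha> * \<epsilon> * s + 4 * \<alpha> * \<epsilon> * (\<Sum>l\<in>L. t l)"
    if S: "S \<subseteq> X" "card S = p"
      and thrS: "\<forall>l\<in>L. \<forall>Y\<in>Ys l. S \<inter> Y \<noteq> {} \<and> \<not> Y \<subseteq> S \<longrightarrow>
          (\<exists>z c. Min (UU l Y) \<le> z \<and> z \<le> Max (UU l Y) \<and> c \<in> C \<and> edist d (ph l z) c = th)"
    for S th
  proof -
    have finS: "finite S" using S finX finite_subset by blast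
    have split: "(\<Sum>x\<in>S. f x) = (\<Sum>l\<in>L. \<Sum>Y\<in>Ys l. \<Sum>x\<in>S \<inter> Y. f x)" for f :: "pt \<Rightarrow> real"
    proof -
      have "S = (\<Union>l\<in>L. S \<inter> Xl l)" using S UX by blast
      hence "(\<Sum>x\<in>S. f x) = (\<Sum>l\<in>L. \<Sum>x\<in>S \<inter> Xl l. f x)"
        using sum.UNION_disjoint[OF finL, of "\<lambda>l. S \<inter> Xl l" f] finS Xdisj by auto
      also have "\<dots> = (\<Sum>l\<in>L. \<Sum>Y\<in>Ys l. \<Sum>x\<in>S \<inter> Y. f x)"
      proof (rule sum.cong[OF refl])
        fix l assume l: "l \<in> L"
        have "S \<inter> Xl l = (\<Union>Y\<in>Ys l. S \<inter> Y)" using Yp1[OF l] by blast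
        thus "(\<Sum>x\<in>S \<inter> Xl l. f x) = (\<Sum>Y\<in>Ys l. \<Sum>x\<in>S \<inter> Y. f x)"
          using sum.UNION_disjoint[OF finYs[OF l], of "\<lambda>Y. S \<inter> Y" f] finS Ydisj[OF l] by auto
      qed
      finally show ?thesis .
    qed
    have cardsplit: "(\<Sum>l\<in>L. \<Sum>Y\<in>Ys l. card (S \<inter> Y)) = card S"
      using split[of "\<lambda>_. 1"] by (simp add: of_nat_sum[symmetric] del: of_nat_sum)
    have perY: "(\<Sum>x\<in>S \<inter> Y. a x - b x) = (\<Sum>u\<in>SU l S (UU l Y). F l u - F l (avg (UU l Y)))"
      if l: "l \<in> L" and Y: "Y \<in> Ys l" for l Y
    proof -
      have SY: "S \<inter> Y = ph l ` SU l S (UU l Y)" using SY[OF l Y] unfolding SU_def .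
      have "(\<Sum>x\<in>S \<inter> Y. a x - b x) = (\<Sum>u\<in>SU l S (UU l Y). a (ph l u) - b (ph l u))"
        unfolding SY by (rule sum.reindex[OF inj_on_subset[OF inj[OF l] subset_UNIV], unfolded o_def])
      also have "\<dots> = (\<Sum>u\<in>SU l S (UU l Y). F l u - F l (avg (UU l Y)))"
      proof (rule sum.cong[OF refl])
        fix u assume "u \<in> SU l S (UU l Y)"
        hence "ph l u \<in> Y" by (simp add: SU_def UU_def)
        hence "cls (ph l u) = Y" using clsP[OF l Y] by blast
        thus "a (ph l u) - b (ph l u) = F l u - F l (avg (UU l Y))" by (simp add: a_def b_def F_def muY[OF l Y])
      qed
      finally show ?thesis .
    qed
    have perL: "(\<Sum>Y\<in>Ys l. \<bar>\<Sum>x\<in>S \<inter> Y. a x - b x\<bar>) \<le> real (\<Sum>Y\<in>Ys l. card (S \<inter> Y)) * ws + 4 * real k * T l"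
      if l: "l \<in> L" for l
    proof -
      let ?UU = "UU l ` Ys l"
      have injU: "inj_on (UU l) (Ys l)"
      proof (rule inj_onI)
        fix Y Y' assume Y: "Y \<in> Ys l" and Y': "Y' \<in> Ys l" and e: "UU l Y = UU l Y'"
        have "Y = ph l ` UU l Y" by (rule Yeq[OF l Y])
        also have "\<dots> = ph l ` UU l Y'" by (simp only: e)
        also have "\<dots> = Y'" by (rule Yeq[OF l Y', symmetric])
        finally show "Y = Y'" .
      qed
      have e1: "(\<Sum>Y\<in>Ys l. \<bar>\<Sum>x\<in>S \<inter> Y. a x - b x\<bar>) = (\<Sum>U\<in>?UU. \<bar>\<Sum>u\<in>SU l S U. F l u - F l (avg U)\<bar>)"
        by (simp add: sum.reindex[OF injU] perY[OF l])
      have e2: "(\<Sum>U\<in>?UU. real (card (SU l S U)) * ws) = real (\<Sum>Y\<in>Ys l. card (S \<inter> Y)) * ws"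
      proof -
        have "card (SU l S (UU l Y)) = card (S \<inter> Y)" if Y: "Y \<in> Ys l" for Y
        proof -
          have "S \<inter> Y = ph l ` SU l S (UU l Y)" using SY[OF l Y] unfolding SU_def .
          thus ?thesis using card_image[OF inj_on_subset[OF inj[OF l] subset_UNIV]] by simp
        qed
        thus ?thesis by (simp add: sum.reindex[OF injU] sum_distrib_right)
      qed
      have "(\<Sum>U\<in>?UU. \<bar>\<Sum>u\<in>SU l S U. distC d (lpt (al l) (vl l) u) C - distC d (lpt (al l) (vl l) (avg U)) C\<bar>)
          \<le> (\<Sum>U\<in>?UU. real (card (SU l S U)) * ws) + 4 * real (card C) * T l"
      proof (rule line_bound[OF np[OF l] finC Cne])
        have "t l > 0" using t0 l by blast
        thus "T l \<ge> 0" using \<alpha> e0 kpos unfolding T_def by (intro mult_nonneg_nonneg divide_nonneg_nonneg) auto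
        show "ws \<ge> 0" using \<alpha> e0 s0 ppos unfolding ws_def by (intro mult_nonneg_nonneg divide_nonneg_nonneg) auto
        show "finite ?UU" using finYs[OF l] by simp
        show "\<forall>U\<in>?UU. finite U \<and> U \<noteq> {}" using finU[OF l] Une[OF l] by auto
        show "\<forall>U\<in>?UU. \<forall>U'\<in>?UU. U \<noteq> U' \<longrightarrow> (\<forall>z. \<not> (Min U \<le> z \<and> z \<le> Max U \<and> Min U' \<le> z \<and> z \<le> Max U'))"
        proof (intro ballI impI allI notI)
          fix U U' z assume U: "U \<in> ?UU" and U': "U' \<in> ?UU" and ne: "U \<noteq> U'"
            and z: "Min U \<le> z \<and> z \<le> Max U \<and> Min U' \<le> z \<and> z \<le> Max U'"
          obtain Y Y' where Y: "Y \<in> Ys l" "U = UU l Y" and Y': "Y' \<in> Ys l" "U' = UU l Y'" using U U' by blast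
          have "Y \<noteq> Y'" using ne Y Y' by auto
          hence "segI Y \<inter> segI Y' = {}" using Yp3[OF l Y(1) Y'(1)] by blast
          moreover have "ph l z \<in> segI Y" using segY[OF l Y(1)] z Y(2) by simp
          moreover have "ph l z \<in> segI Y'" using segY[OF l Y'(1)] z Y'(2) by simp
          ultimately show False by blast
        qed
        show "\<forall>U\<in>?UU. SU l S U \<subseteq> U" by (auto simp: SU_def)
        show "\<forall>U\<in>?UU. SU l S U \<noteq> {} \<and> SU l S U \<noteq> U \<longrightarrow>
            (\<exists>z c. Min U \<le> z \<and> z \<le> Max U \<and> c \<in> C \<and> edist d (lpt (al l) (vl l) z) c = th)"
        proof (intro ballI impI)
          fix U assume U: "U \<in> ?UU" and h: "SU l S U \<noteq> {} \<and> SU l S U \<noteq> U"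
          obtain Y where Y: "Y \<in> Ys l" "U = UU l Y" using U by blast
          have "S \<inter> Y \<noteq> {}" using h Y unfolding SU_def UU_def by auto
          moreover have "\<not> Y \<subseteq> S" using h Y unfolding SU_def UU_def by auto
          ultimately show "\<exists>z c. Min U \<le> z \<and> z \<le> Max U \<and> c \<in> C \<and> edist d (lpt (al l) (vl l) z) c = th"
            using thrS l Y unfolding ph_def by blast
        qed
        show "\<forall>U\<in>?UU. nrm d (vl l) * (Max U - Min U) \<le> ws \<or> nrm d (vl l) * (\<Sum>u\<in>U. \<bar>u - avg U\<bar>) \<le> T l"
        proof
          fix U assume U: "U \<in> ?UU"
          obtain Y where Y: "Y \<in> Ys l" "U = UU l Y" using U by blast
          have "seglen d (segI Y) \<le> ws \<or> delta d Y \<le> T l" using Yp4[OF l Y(1)] unfolding ws_def T_def .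
          moreover have "nrm d (vl l) * (Max U - Min U) \<le> seglen d (segI Y)"
            using seglenY[OF l Y(1)] Y(2) by simp
          moreover have "delta d Y = nrm d (vl l) * (\<Sum>u\<in>U. \<bar>u - avg U\<bar>)"
            using deltaY[OF l Y(1)] Y(2) by simp
          ultimately show "nrm d (vl l) * (Max U - Min U) \<le> ws \<or> nrm d (vl l) * (\<Sum>u\<in>U. \<bar>u - avg U\<bar>) \<le> T l"
            by linarith
        qed
      qed
      thus ?thesis unfolding e1 e2[symmetric] F_def ph_def cC .
    qed
    have "\<bar>\<Sum>x\<in>S. a x - b x\<bar> \<le> (\<Sum>l\<in>L. \<bar>\<Sum>Y\<in>Ys l. \<Sum>x\<in>S \<inter> Y. a x - b x\<bar>)"
      unfolding split by (rule sum_abs)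
    also have "\<dots> \<le> (\<Sum>l\<in>L. \<Sum>Y\<in>Ys l. \<bar>\<Sum>x\<in>S \<inter> Y. a x - b x\<bar>)"
      by (rule sum_mono) (rule sum_abs)
    also have "\<dots> \<le> (\<Sum>l\<in>L. real (\<Sum>Y\<in>Ys l. card (S \<inter> Y)) * ws + 4 * real k * T l)"
      by (rule sum_mono) (rule perL)
    also have "\<dots> = real (card S) * ws + 4 * \<alpha> * \<epsilon> * (\<Sum>l\<in>L. t l)"
    proof -
      have "(\<Sum>l\<in>L. real (\<Sum>Y\<in>Ys l. card (S \<inter> Y)) * ws) = real (card S) * ws"
        using cardsplit by (simp add: sum_distrib_right[symmetric] of_nat_sum[symmetric] del: of_nat_sum)
      moreover have "(\<Sum>l\<in>L. 4 * real k * T l) = 4 * \<alpha> * \<epsilon> * (\<Sum>l\<in>L. t l)"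
        using kpos by (simp add: T_def sum_distrib_left mult.assoc)
      ultimately show ?thesis by (simp add: sum.distrib)
    qed
    also have "real (card S) * ws = \<alpha> * \<epsilon> * s" using S ppos by (simp add: ws_def)
    finally show ?thesis .
  qed
  have thrA: "\<forall>l\<in>L. \<forall>Y\<in>Ys l. Sa \<inter> Y \<noteq> {} \<and> \<not> Y \<subseteq> Sa \<longrightarrow>
          (\<exists>z c. Min (UU l Y) \<le> z \<and> z \<le> Max (UU l Y) \<and> c \<in> C \<and> edist d (ph l z) c = tha)"
  proof (intro ballI impI)
    fix l Y assume l: "l \<in> L" and Y: "Y \<in> Ys l" and h: "Sa \<inter> Y \<noteq> {} \<and> \<not> Y \<subseteq> Sa"
    obtain x y where xy: "x \<in> Sa" "x \<in> Y" "y \<in> Y" "y \<notin> Sa" using h by blast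
    obtain ux uy where u: "ux \<in> UU l Y" "uy \<in> UU l Y" "x = ph l ux" "y = ph l uy"
      using Yin[OF l Y xy(2)] Yin[OF l Y xy(3)] by blast
    have yX: "y \<in> X" using xy YX[OF l Y] XlX[OF l] by blast
    have ax: "tha \<le> F l ux" using Sa(4) xy u by (simp add: a_def F_def)
    have ay: "F l uy \<le> tha" using Sa(5) xy u yX by (simp add: a_def F_def)
    obtain c where c: "c \<in> C" "F l uy = edist d (ph l uy) c" using distC_att[OF finC Cne] unfolding F_def by blast
    have cx: "F l ux \<le> edist d (ph l ux) c" using distC_le[OF finC c(1)] unfolding F_def .
    have cont: "continuous_on A (\<lambda>w. edist d (ph l w) c)" for A unfolding ph_def by (rule h_cont)
    have bnds: "Min (UU l Y) \<le> ux" "ux \<le> Max (UU l Y)" "Min (UU l Y) \<le> uy" "uy \<le> Max (UU l Y)"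
      using u finU[OF l Y] by auto
    show "\<exists>z c. Min (UU l Y) \<le> z \<and> z \<le> Max (UU l Y) \<and> c \<in> C \<and> edist d (ph l z) c = tha"
    proof (cases "uy \<le> ux")
      case True
      obtain z where "uy \<le> z" "z \<le> ux" "edist d (ph l z) c = tha"
        using IVT'[of "\<lambda>w. edist d (ph l w) c" uy tha ux, OF _ _ True cont] c ax ay cx by auto
      thus ?thesis using bnds c(1) by (intro exI[of _ z] exI[of _ c]) auto
    next
      case False
      obtain z where "ux \<le> z" "z \<le> uy" "edist d (ph l z) c = tha"
        using IVT2'[of "\<lambda>w. edist d (ph l w) c" uy tha ux, OF _ _ _ cont] False c ax ay cx by auto
      thus ?thesis using bnds c(1) by (intro exI[of _ z] exI[of _ c]) auto
    qed
  qed
  have thrB: "\<forall>l\<in>L. \<forall>Y\<in>Ys l. Sb \<inter> Y \<noteq> {} \<and> \<not> Y \<subseteq> Sb \<longrightarrow>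
          (\<exists>z c. Min (UU l Y) \<le> z \<and> z \<le> Max (UU l Y) \<and> c \<in> C \<and> edist d (ph l z) c = thb)"
  proof (intro ballI impI)
    fix l Y assume l: "l \<in> L" and Y: "Y \<in> Ys l" and h: "Sb \<inter> Y \<noteq> {} \<and> \<not> Y \<subseteq> Sb"
    obtain x y where xy: "x \<in> Sb" "x \<in> Y" "y \<in> Y" "y \<notin> Sb" using h by blast
    have yX: "y \<in> X" using xy YX[OF l Y] XlX[OF l] by blast
    have bx: "b x = F l (avg (UU l Y))" "b y = F l (avg (UU l Y))"
      using clsP[OF l Y] xy by (auto simp: b_def F_def muY[OF l Y])
    have "F l (avg (UU l Y)) = thb" using Sb(4,5) xy yX bx by force
    moreover obtain c where c: "c \<in> C" "F l (avg (UU l Y)) = edist d (ph l (avg (UU l Y))) c"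
      using distC_att[OF finC Cne] unfolding F_def by blast
    moreover have "Min (UU l Y) \<le> avg (UU l Y)" "avg (UU l Y) \<le> Max (UU l Y)"
      using avg_bounds[OF finU[OF l Y] Une[OF l Y]] by auto
    ultimately show "\<exists>z c. Min (UU l Y) \<le> z \<and> z \<le> Max (UU l Y) \<and> c \<in> C \<and> edist d (ph l z) c = thb"
      by metis
  qed
  have bA: "\<bar>\<Sum>x\<in>Sa. a x - b x\<bar> \<le> \<alpha> * \<epsilon> * s + 4 * \<alpha> * \<epsilon> * (\<Sum>l\<in>L. t l)"
    by (rule BND[OF Sa(1,2) thrA])
  have bB: "\<bar>\<Sum>x\<in>Sb. a x - b x\<bar> \<le> \<alpha> * \<epsilon> * s + 4 * \<alpha> * \<epsilon> * (\<Sum>l\<in>L. t l)"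
    by (rule BND[OF Sb(1,2) thrB])
  have cD: "costp d p D C = sum b Sb" using costD Sb(3) by simp
  have cX: "costp d p (mset_set X) C = sum a Sa" using costX Sa(3) by simp
  have d1: "costp d p D C - costp d p (mset_set X) C \<le> \<bar>\<Sum>x\<in>Sb. a x - b x\<bar>"
    using ex1 unfolding cD cX by (simp add: sum_subtractf)
  have d2: "costp d p (mset_set X) C - costp d p D C \<le> \<bar>\<Sum>x\<in>Sa. a x - b x\<bar>"
    using ex2 unfolding cD cX by (simp add: sum_subtractf)
  have tpos: "(\<Sum>l\<in>L. t l) \<ge> 0" using t0 by (simp add: sum_nonneg less_imp_le)
  have ae: "\<alpha> * \<epsilon> > 0" using \<alpha> e0 by simp
  have "\<alpha> * \<epsilon> * s + 4 * \<alpha> * \<epsilon> * (\<Sum>l\<in>L. t l) \<le> 5 * \<alpha> * \<epsilon> * (s + (\<Sum>l\<in>L. t l))"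
  proof -
    have "0 \<le> (\<alpha> * \<epsilon>) * s" using ae s0 by simp
    hence "\<alpha> * \<epsilon> * s \<le> 5 * (\<alpha> * \<epsilon>) * s" by linarith
    moreover have "4 * (\<alpha> * \<epsilon>) * (\<Sum>l\<in>L. t l) \<le> 5 * (\<alpha> * \<epsilon>) * (\<Sum>l\<in>L. t l)"
      using ae tpos by (intro mult_right_mono) auto
    ultimately show ?thesis by (simp add: algebra_simps)
  qed
  thus ?thesis using d1 d2 bA bB unfolding D_def by linarith
qed

theorem lemma4p1:
  "\<forall>\<alpha>::real. \<alpha> > 0 \<longrightarrow> (\<exists>\<beta>::real. \<beta> > 0 \<and>
    (\<forall>(d::nat) (k::nat) (\<epsilon>::real) (X::pt set) (p::nat) (L::pt set set)
       (s::real) (t::pt set \<Rightarrow> real) (Xl::pt set \<Rightarrow> pt set) (Ys::pt set \<Rightarrow> pt set set)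
       (C::pt set).
      k \<ge> 1 \<longrightarrow> 0 < \<epsilon> \<longrightarrow> \<epsilon> < 1 \<longrightarrow>
      finite X \<longrightarrow> (\<forall>x\<in>X. in_Rd d x) \<longrightarrow>
      1 \<le> p \<longrightarrow> p \<le> card X \<longrightarrow>
      finite L \<longrightarrow> (\<forall>l\<in>L. is_line d l) \<longrightarrow>
      s > 0 \<longrightarrow> (\<forall>l\<in>L. t l > 0) \<longrightarrow>
      \<comment> \<open>(i) X is partitioned into the sets X_l, X_l on l\<close>
      (\<Union>l\<in>L. Xl l) = X \<longrightarrow>
      (\<forall>l\<in>L. Xl l \<subseteq> l) \<longrightarrow>
      (\<forall>l\<in>L. \<forall>l'\<in>L. l \<noteq> l' \<longrightarrow> Xl l \<inter> Xl l' = {}) \<longrightarrow>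
      \<comment> \<open>(ii) each X_l is partitioned into sub-intervals with disjoint segments\<close>
      (\<forall>l\<in>L. \<Union>(Ys l) = Xl l \<and> (\<forall>Y\<in>Ys l. Y \<noteq> {}) \<and>
         (\<forall>Y\<in>Ys l. \<forall>Y'\<in>Ys l. Y \<noteq> Y' \<longrightarrow> segI Y \<inter> segI Y' = {}) \<and>
         (\<forall>Y\<in>Ys l. seglen d (segI Y) \<le> \<alpha> * \<epsilon> / real p * s
                    \<or> delta d Y \<le> \<alpha> * \<epsilon> / real k * t l)) \<longrightarrow>
      finite C \<longrightarrow> card C = k \<longrightarrow> (\<forall>c\<in>C. in_Rd d c) \<longrightarrow>
      \<bar>costp d p (\<Sum>l\<in>L. \<Sum>Y\<in>Ys l. replicate_mset (card Y) (mu Y)) C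
        - costp d p (mset_set X) C\<bar>
        \<le> \<beta> * \<epsilon> * (s + (\<Sum>l\<in>L. t l))))"
  apply (intro allI impI)
  subgoal for \<alpha>
    apply (rule exI[of _ "5 * \<alpha>"])
    apply (intro conjI allI impI)
     apply simp
    apply (rule main_bound)
                   apply assumption+
    done
  done

end
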